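(* Let $\alpha\in(r_2,1)$ and $\mathcal{E}=\{T_{A_2}\leq N^{2\alpha}\}$. Then for every $N\geq1$, $$\sup_{x\in A_1}P^{\overline\mu}_x[\mathcal{E}^c]\leq C_4\exp(-C_5N^{c_6}),\qquad\sup_{x\in A_1}P_x[\mathcal{E}^c]\leq C_4'\exp(-C_5'N^{c_6'}),$$ with positive constants depending on $\alpha$.
   Context: Standing setting. $d\geq3$; $P_x$ is the law of continuous-time simple random walk $(X_t)$ on $\mathbb{Z}^d$ with jump rate 1 started at $x$; $T_K=\inf\{t\geq0:X_t\notin K\}$. $B_r\subseteq\mathbb{R}^d$ open Euclidean ball of radius $r$ at $0$; $B(x,r)=\{y\in\mathbb{Z}^d:|y-x|_\infty\leq r\}$; $x\sim y$ means $|x-y|=1$. $D\subseteq\mathbb{R}^d$ is either the closure of a smooth bounded domain containing $0$ or the closure of an open sup-norm ball containing $0$; $r_D=\sup\{|x|:x\in D\}$; $D^\delta$ its closed $\delta$-neighbourhood. Let $\mathfrak{r}\geq0$ be an integer, $F:[0,\infty)^{B(0,\mathfrak{r})}\to[0,\infty)$ measurable with $F(0)=0$, $F\not\equiv0$, $F$ non-decreasing in each argument, and $F(\ell+\ell')\leq F(\ell)+c_1(\mathbf{1}_{\{\ell'\neq0\}}+\sum_{|x|_\infty\leq\mathfrak{r}}\ell'_x)$; $\vartheta(u)=\mathbb{E}[F((\mathcal{L}^u_y)_{y\in B(0,\mathfrak{r})})]$ with $(\mathcal{L}^u_x)$ the occupation-time field of continuous-time random interlacements at level $u$; $\vartheta_\infty=\lim_{u\to\infty}\vartheta(u)$;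 $\mathcal{I}_D(\mu)=\inf\{\frac{1}{2d}\int|\nabla\psi|^2:\psi\in D^{1,2}(\mathbb{R}^d),\frac{1}{|D|}\int_D\vartheta(\psi^2)\geq\mu\}$. Fix $\nu\in(0,\vartheta_\infty)$, $\delta\in(0,1\wedge(r_D/2))$, an integer $\mathcal{R}>4r_D$, and $\varphi:\mathbb{R}^d\to\mathbb{R}$ with: $\varphi\in C^\infty(\overline{B_{\mathcal{R}}})$, $\mathrm{supp}\,\varphi=\overline{B_{\mathcal{R}}}$, $\varphi>0$ on $B_{\mathcal{R}}$; $\varphi$ harmonic on $B_{\mathcal{R}}\setminus D^\delta$; $\nu(1+\delta)\leq\frac{1}{|D|}\int_D\vartheta(\varphi^2)\leq\nu(1+2\delta)$ and $\mathcal{I}_D(\nu+\delta)\leq\frac{1}{2d}\int|\nabla\varphi|^2\leq\mathcal{I}_D(\nu+2\delta)$. $\varphi_N(x)=\varphi(x/N)$. Fix $\eta\in(0,\mathcal{R}/100)$, $x_0\in(ND^\delta)\cap\mathbb{Z}^d$, reals $0<r_1<\dots<r_5<\frac14$ with $r_1(d-2)+r_5<1$, $r_1<\frac{d-2}{d-1}r_2$, and small $\widetilde\delta>0$; $A_j=B(x_0,\lfloor N^{r_j}\rfloor)$, $1\leq j\leq5$, $A_6=B(x_0,\lfloor\widetilde\delta N/100\rfloor)\subseteq(NB_{\mathcal{R}-\eta})\cap\mathbb{Z}^d$ for all $N$. Let $\varphi_N^{\mathrm{per}}$ be the $(2\lfloor N^{r_5}\rfloor+3)$-periodic extension to $\mathbb{Z}^d$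 of the restriction of $\varphi_N$ to $B(x_0,\lfloor N^{r_5}\rfloor+1)$, and set $\overline\mu_{x,y}=\frac{1}{2d}\varphi_N^{\mathrm{per}}(x)\varphi_N^{\mathrm{per}}(y)$ for $x\sim y$ and $\overline\nu_x=(\varphi_N^{\mathrm{per}})^2(x)$. $P^{\overline\mu}_x$ is the law of the continuous-time Markov chain on $\mathbb{Z}^d$ started at $x$ with generator $g\mapsto\sum_{y\sim x}\frac{\overline\mu_{x,y}}{\overline\nu_x}(g(y)-g(x))$. Constants may depend on $d,\varphi,\delta,\mathcal{R},\eta,(r_j),\widetilde\delta$ but not on $N$ or $x_0$. *)

theory Defs
  imports "HOL-Analysis.Analysis" "HOL-Probability.Probability"
begin

definition rvec :: "int^'d \<Rightarrow> real^'d" where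
  "rvec x = (\<chi> i. real_of_int (x $ i))"

definition nbr :: "int^'d \<Rightarrow> int^'d \<Rightarrow> bool" where
  "nbr x y \<longleftrightarrow> norm (rvec x - rvec y) = 1"

definition zbox :: "int^'d \<Rightarrow> int \<Rightarrow> (int^'d) set" where
  "zbox x r = {y. \<forall>i. \<bar>y $ i - x $ i\<bar> \<le> r}"

fun iter_deriv :: "'a::euclidean_space list \<Rightarrow> ('a \<Rightarrow> real) \<Rightarrow> 'a \<Rightarrow> real" where
  "iter_deriv [] f = f"
| "iter_deriv (v # vs) f = (\<lambda>x. frechet_derivative (iter_deriv vs f) (at x) v)"

definition smooth_on :: "'a::euclidean_space set \<Rightarrow> ('a \<Rightarrow> real) \<Rightarrow> bool" where
  "smooth_on U f \<longleftrightarrow> (\<forall>vs. (\<forall>x\<in>U. iter_deriv vs f differentiable (at x))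
                            \<and> continuous_on U (iter_deriv vs f))"

definition smooth_on_closed :: "'a::euclidean_space set \<Rightarrow> ('a \<Rightarrow> real) \<Rightarrow> bool" where
  "smooth_on_closed K f \<longleftrightarrow> (\<exists>U g. open U \<and> K \<subseteq> U \<and> smooth_on U g \<and> (\<forall>x\<in>K. g x = f x))"

definition harmonic_on :: "'a::euclidean_space set \<Rightarrow> ('a \<Rightarrow> real) \<Rightarrow> bool" where
  "harmonic_on W f \<longleftrightarrow> smooth_on W f \<and> (\<forall>x\<in>W. (\<Sum>i\<in>Basis. iter_deriv [i, i] f x) = 0)"

definition smooth_bounded_domain :: "'a::euclidean_space set \<Rightarrow> bool" where
  "smooth_bounded_domain \<Omega> \<longleftrightarrow> open \<Omega> \<and> connected \<Omega> \<and> bounded \<Omega> \<and> \<Omega> \<noteq> {} \<and>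
     (\<forall>p\<in>frontier \<Omega>. \<exists>U \<psi>. open U \<and> p \<in> U \<and> smooth_on U \<psi> \<and>
         (\<forall>x\<in>U. \<exists>v. frechet_derivative \<psi> (at x) v \<noteq> 0) \<and> \<Omega> \<inter> U = {x\<in>U. \<psi> x < 0})"

definition sup_ball :: "real^'d \<Rightarrow> real \<Rightarrow> (real^'d) set" where
  "sup_ball c \<rho> = {x. \<forall>i. \<bar>x $ i - c $ i\<bar> < \<rho>}"

definition admissible_D :: "(real^'d) set \<Rightarrow> bool" where
  "admissible_D D \<longleftrightarrow>
     (\<exists>\<Omega>. smooth_bounded_domain \<Omega> \<and> 0 \<in> \<Omega> \<and> D = closure \<Omega>) \<or>
     (\<exists>c \<rho>. \<rho> > 0 \<and> 0 \<in> sup_ball c \<rho> \<and> D = closure (sup_ball c \<rho>))"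

definition rD :: "(real^'d) set \<Rightarrow> real" where
  "rD D = Sup (norm ` D)"

definition nbhd :: "(real^'d) set \<Rightarrow> real \<Rightarrow> (real^'d) set" where
  "nbhd D \<delta> = {x. \<exists>y\<in>D. dist x y \<le> \<delta>}"

text \<open>q x y = jump rate from x to a neighbour y.  The chain is X_t = Y_(N_t) with N a Poisson
process of rate Lambda = 1 + sup_x (total rate at x) and Y the discrete chain with kernel below.\<close>

definition total_rate :: "(int^'d \<Rightarrow> int^'d \<Rightarrow> real) \<Rightarrow> int^'d \<Rightarrow> real" where
  "total_rate q x = (\<Sum>y\<in>{y. nbr x y}. q x y)"

definition unif_rate :: "(int^'d \<Rightarrow> int^'d \<Rightarrow> real) \<Rightarrow> real" where
  "unif_rate q = 1 + (SUP x. total_rate q x)"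

definition unif_kernel :: "(int^'d \<Rightarrow> int^'d \<Rightarrow> real) \<Rightarrow> int^'d \<Rightarrow> (int^'d) pmf" where
  "unif_kernel q x = embed_pmf (\<lambda>y. if y = x then 1 - total_rate q x / unif_rate q
                                    else if nbr x y then q x y / unif_rate q else 0)"

fun path_pmf :: "('a \<Rightarrow> 'a pmf) \<Rightarrow> 'a \<Rightarrow> nat \<Rightarrow> 'a list pmf" where
  "path_pmf K x 0 = return_pmf [x]"
| "path_pmf K x (Suc n) = bind_pmf (path_pmf K x n) (\<lambda>p. map_pmf (\<lambda>y. p @ [y]) (K (last p)))"

text \<open>Law of the sequence of visited states of X on [0,t], started at x.\<close>
definition ctmc_path_upto :: "(int^'d \<Rightarrow> int^'d \<Rightarrow> real) \<Rightarrow> int^'d \<Rightarrow> real \<Rightarrow> (int^'d) list pmf" where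
  "ctmc_path_upto q x t =
     bind_pmf (poisson_pmf (unif_rate q * t)) (\<lambda>n. path_pmf (unif_kernel q) x n)"

text \<open>P_x[T_K > t] = P_x[X_s \<in> K for all s in [0,t]].\<close>
definition exit_after :: "(int^'d \<Rightarrow> int^'d \<Rightarrow> real) \<Rightarrow> int^'d \<Rightarrow> (int^'d) set \<Rightarrow> real \<Rightarrow> real" where
  "exit_after q x K t = measure_pmf.prob (ctmc_path_upto q x t) {p. set p \<subseteq> K}"

definition srw_rate :: "int^'d \<Rightarrow> int^'d \<Rightarrow> real" where
  "srw_rate x y = 1 / (2 * real CARD('d))"

text \<open>(2L+3)-periodic extension of phi_N restricted to B(x0, L+1), L = floor(N^r5).\<close>
definition phi_per :: "(real^'d \<Rightarrow> real) \<Rightarrow> nat \<Rightarrow> int^'d \<Rightarrow> real \<Rightarrow> int^'d \<Rightarrow> real" where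
  "phi_per \<phi> N x0 r5 x =
     (let L = \<lfloor>real N powr r5\<rfloor>
      in \<phi> ((1 / real N) *\<^sub>R rvec (\<chi> i. x0 $ i + ((x $ i - x0 $ i + L + 1) mod (2 * L + 3)) - (L + 1))))"

definition mu_bar :: "(real^'d \<Rightarrow> real) \<Rightarrow> nat \<Rightarrow> int^'d \<Rightarrow> real \<Rightarrow> int^'d \<Rightarrow> int^'d \<Rightarrow> real" where
  "mu_bar \<phi> N x0 r5 x y = 1 / (2 * real CARD('d)) * phi_per \<phi> N x0 r5 x * phi_per \<phi> N x0 r5 y"

definition nu_bar :: "(real^'d \<Rightarrow> real) \<Rightarrow> nat \<Rightarrow> int^'d \<Rightarrow> real \<Rightarrow> int^'d \<Rightarrow> real" where
  "nu_bar \<phi> N x0 r5 x = (phi_per \<phi> N x0 r5 x)\<^sup>2"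

text \<open>Jump rates of the chain with generator g \<mapsto> sum_{y~x} mu_xy/nu_x (g y - g x).\<close>
definition tilted_rate :: "(real^'d \<Rightarrow> real) \<Rightarrow> nat \<Rightarrow> int^'d \<Rightarrow> real \<Rightarrow> int^'d \<Rightarrow> int^'d \<Rightarrow> real" where
  "tilted_rate \<phi> N x0 r5 x y = mu_bar \<phi> N x0 r5 x y / nu_bar \<phi> N x0 r5 x"

end

theory Submission
  imports Defs
begin



lemma path_pmf_nonempty: "p \<in> set_pmf (path_pmf K x n) \<Longrightarrow> p \<noteq> []"
  by (induction n arbitrary: p) auto

lemma path_pmf_Suc_front:
  "path_pmf K x (Suc n) = bind_pmf (K x) (\<lambda>y. map_pmf (Cons x) (path_pmf K y n))"
proof (induction n arbitrary: x)
  case 0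
  then show ?case by (simp add: map_pmf_def bind_return_pmf)
next
  case (Suc n)
  have "path_pmf K x (Suc (Suc n)) = bind_pmf (path_pmf K x (Suc n)) (\<lambda>p. map_pmf (\<lambda>y. p @ [y]) (K (last p)))"
    by simp
  also have "\<dots> = bind_pmf (K x) (\<lambda>y. bind_pmf (map_pmf (Cons x) (path_pmf K y n)) (\<lambda>p. map_pmf (\<lambda>z. p @ [z]) (K (last p))))"
    by (simp only: Suc bind_assoc_pmf)
  also have "\<dots> = bind_pmf (K x) (\<lambda>y. map_pmf (Cons x) (path_pmf K y (Suc n)))"
  proof (rule bind_pmf_cong[OF refl])
    fix y
    have "bind_pmf (map_pmf (Cons x) (path_pmf K y n)) (\<lambda>p. map_pmf (\<lambda>z. p @ [z]) (K (last p)))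
        = bind_pmf (path_pmf K y n) (\<lambda>p. map_pmf (\<lambda>z. (x # p) @ [z]) (K (last (x # p))))"
      by (simp add: bind_map_pmf)
    also have "\<dots> = bind_pmf (path_pmf K y n) (\<lambda>p. map_pmf (Cons x) (map_pmf (\<lambda>z. p @ [z]) (K (last p))))"
      by (rule bind_pmf_cong[OF refl]) (auto dest: path_pmf_nonempty simp: pmf.map_comp o_def)
    also have "\<dots> = map_pmf (Cons x) (path_pmf K y (Suc n))"
      by (simp add: map_bind_pmf)
    finally show "bind_pmf (map_pmf (Cons x) (path_pmf K y n)) (\<lambda>p. map_pmf (\<lambda>z. p @ [z]) (K (last p))) = map_pmf (Cons x) (path_pmf K y (Suc n))" .
  qed
  finally show ?case .
qed

lemma measure_bind_pmf_real:
  "measure_pmf.prob (bind_pmf M N) X = (\<integral>x. measure_pmf.prob (N x) X \<partial>M)"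
proof -
  have "emeasure (bind_pmf M N) X = (\<integral>\<^sup>+x. emeasure (N x) X \<partial>M)" by simp
  also have "\<dots> = (\<integral>\<^sup>+x. ennreal (measure_pmf.prob (N x) X) \<partial>M)"
    by (simp add: measure_pmf.emeasure_eq_measure)
  also have "\<dots> = ennreal (\<integral>x. measure_pmf.prob (N x) X \<partial>M)"
    by (rule nn_integral_eq_integral)
       (auto intro!: measure_pmf.integrable_const_bound[where B=1])
  finally show ?thesis
    by (simp add: measure_pmf.emeasure_eq_measure)
qed

definition ustay :: "('a \<Rightarrow> 'a pmf) \<Rightarrow> 'a set \<Rightarrow> nat \<Rightarrow> 'a \<Rightarrow> real" where
  "ustay K A n x = measure_pmf.prob (path_pmf K x n) {p. set p \<subseteq> A}"

lemma ustay_0: "ustay K A 0 x = (if x \<in> A then 1 else 0)"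
  by (simp add: ustay_def)

lemma ustay_0_fun: "ustay K A 0 = (\<lambda>x. if x \<in> A then 1 else 0)"
  by (rule ext) (simp add: ustay_0)

lemma ustay_Suc: "ustay K A (Suc n) x = (if x \<in> A then (\<integral>y. ustay K A n y \<partial>K x) else 0)"
  unfolding ustay_def path_pmf_Suc_front measure_bind_pmf_real measure_map_pmf
  by (auto simp: vimage_def)

lemma ustay_bounds: "0 \<le> ustay K A n x" "ustay K A n x \<le> 1"
  by (simp_all add: ustay_def)

lemma ustay_integrable: "integrable (measure_pmf M) (\<lambda>y. ustay K A n y)"
  by (rule measure_pmf.integrable_const_bound[where B=1]) (auto simp: ustay_def)

lemma ustay_outside: "x \<notin> A \<Longrightarrow> ustay K A n x = 0"
  by (cases n) (simp_all add: ustay_0 ustay_Suc)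

lemma ustay_Suc_le: "ustay K A (Suc n) x \<le> ustay K A n x"
proof (induction n arbitrary: x)
  case 0
  have "(\<integral>y. ustay K A 0 y \<partial>K x) \<le> (\<integral>y. 1 \<partial>K x)"
    by (rule integral_mono) (auto simp: ustay_integrable ustay_bounds)
  then show ?case by (simp add: ustay_Suc ustay_0_fun)
next
  case (Suc n)
  have "(\<integral>y. ustay K A (Suc n) y \<partial>K x) \<le> (\<integral>y. ustay K A n y \<partial>K x)"
    by (rule integral_mono) (auto simp: ustay_integrable Suc)
  then show ?case by (subst (1 2) ustay_Suc) simp
qed

lemma ustay_antimono: "m \<le> n \<Longrightarrow> ustay K A n x \<le> ustay K A m x"
proof (induction n rule: dec_induct)
  case base then show ?case by simp
next
  case (step n) then show ?case using ustay_Suc_le[of K A n x] by linarith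
qed

lemma ustay_lyap:
  fixes W :: "'a \<Rightarrow> real"
  assumes W0: "\<And>y. 0 \<le> W y" and k: "0 < \<kappa>"
    and WI: "\<And>x. integrable (measure_pmf (K x)) W"
    and drift: "\<And>x. x \<in> A \<Longrightarrow> (\<integral>y. W y \<partial>K x) \<le> W x - \<kappa>"
  shows "(\<Sum>k<n. ustay K A k x) \<le> W x / \<kappa>"
proof (induction n arbitrary: x)
  case 0 then show ?case using W0 k by simp
next
  case (Suc n)
  show ?case
  proof (cases "x \<in> A")
    case False
    then show ?thesis using W0 k by (simp add: ustay_outside)
  next
    case True
    have "(\<Sum>k<Suc n. ustay K A k x) = ustay K A 0 x + (\<Sum>k<n. ustay K A (Suc k) x)"
      by (rule sum.lessThan_Suc_shift)
    also have "\<dots> = 1 + (\<Sum>k<n. (\<integral>y. ustay K A k y \<partial>K x))"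
      using True by (simp add: ustay_0 ustay_Suc)
    also have "\<dots> = 1 + (\<integral>y. (\<Sum>k<n. ustay K A k y) \<partial>K x)"
      by (simp add: ustay_integrable)
    also have "\<dots> \<le> 1 + (\<integral>y. W y / \<kappa> \<partial>K x)"
      by (intro add_left_mono integral_mono) (auto simp: ustay_integrable WI Suc)
    also have "\<dots> = 1 + (\<integral>y. W y \<partial>K x) / \<kappa>" by simp
    also have "\<dots> \<le> 1 + (W x - \<kappa>) / \<kappa>"
      using drift[OF True] k by (simp add: divide_right_mono)
    also have "\<dots> = W x / \<kappa>" using k by (simp add: field_simps)
    finally show ?thesis .
  qed
qed

lemma ustay_half:
  fixes W :: "'a \<Rightarrow> real"
  assumes W0: "\<And>y. 0 \<le> W y" and k: "0 < \<kappa>"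
    and WI: "\<And>x. integrable (measure_pmf (K x)) W"
    and drift: "\<And>x. x \<in> A \<Longrightarrow> (\<integral>y. W y \<partial>K x) \<le> W x - \<kappa>"
    and Wb: "\<And>x. x \<in> A \<Longrightarrow> W x \<le> Bd"
    and n: "2 * Bd \<le> real (Suc n) * \<kappa>"
  shows "ustay K A n x \<le> 1/2"
proof (cases "x \<in> A")
  case False then show ?thesis by (simp add: ustay_outside)
next
  case True
  have "real (Suc n) * ustay K A n x = (\<Sum>k<Suc n. ustay K A n x)" by simp
  also have "\<dots> \<le> (\<Sum>k<Suc n. ustay K A k x)"
    by (intro sum_mono ustay_antimono) simp
  also have "\<dots> \<le> W x / \<kappa>" by (rule ustay_lyap[OF W0 k WI drift])
  also have "\<dots> \<le> Bd / \<kappa>" using Wb[OF True] k by (simp add: divide_right_mono)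
  finally have "real (Suc n) * ustay K A n x * \<kappa> \<le> Bd"
    using k by (simp add: field_simps)
  then have "real (Suc n) * \<kappa> * ustay K A n x \<le> Bd" by (simp add: ac_simps)
  with n have "2 * Bd * ustay K A n x \<le> real (Suc n) * \<kappa> * ustay K A n x"
    by (intro mult_right_mono) (auto simp: ustay_bounds)
  with \<open>real (Suc n) * \<kappa> * ustay K A n x \<le> Bd\<close> have "2 * Bd * ustay K A n x \<le> Bd" by linarith
  moreover have "0 \<le> (\<integral>y. W y \<partial>K x)" by (rule integral_nonneg_AE) (simp add: W0)
  then have "0 < Bd" using Wb[OF True] drift[OF True] k by linarith
  ultimately have "Bd * (2 * ustay K A n x) \<le> Bd * 1 \<and> 0 < Bd" by (simp add: ac_simps)
  then have "2 * ustay K A n x \<le> 1" by (meson mult_le_cancel_left_pos)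
  then show ?thesis by simp
qed

lemma ustay_markov:
  assumes "\<And>y. ustay K A n y \<le> \<beta>"
  shows "ustay K A (m + n) x \<le> \<beta> * ustay K A m x"
proof (induction m arbitrary: x)
  case 0 then show ?case using assms by (simp add: ustay_0 ustay_outside)
next
  case (Suc m)
  show ?case
  proof (cases "x \<in> A")
    case False then show ?thesis by (simp add: ustay_outside)
  next
    case True
    have "ustay K A (Suc m + n) x = (\<integral>y. ustay K A (m + n) y \<partial>K x)"
      using True by (simp add: ustay_Suc)
    also have "\<dots> \<le> (\<integral>y. \<beta> * ustay K A m y \<partial>K x)"
      by (rule integral_mono) (auto simp: ustay_integrable Suc)
    also have "\<dots> = \<beta> * ustay K A (Suc m) x" using True by (simp add: ustay_Suc)
    finally show ?thesis .
  qed
qed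

lemma ustay_geom:
  assumes "\<And>y. ustay K A n y \<le> \<beta>"
  shows "ustay K A (j * n) x \<le> \<beta> ^ j"
proof (induction j arbitrary: x)
  case 0 then show ?case by (simp add: ustay_0)
next
  case (Suc j)
  have b0: "0 \<le> \<beta>" using assms[of x] ustay_bounds[of K A n x] by linarith
  have "ustay K A (Suc j * n) x = ustay K A (j * n + n) x" by (simp add: ac_simps)
  also have "\<dots> \<le> \<beta> * ustay K A (j * n) x" by (rule ustay_markov[OF assms])
  also have "\<dots> \<le> \<beta> * \<beta> ^ j" by (rule mult_left_mono[OF Suc b0])
  finally show ?case by simp
qed




lemma rvec_add: "rvec (x + y) = rvec x + rvec y"
  by (simp add: rvec_def vec_eq_iff)
lemma rvec_diff: "rvec (x - y) = rvec x - rvec y"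
  by (simp add: rvec_def vec_eq_iff)
lemma rvec_axis: "rvec (axis i (1::int)) = axis i (1::real)"
  by (simp add: rvec_def vec_eq_iff axis_def)

lemma nbr_iff: "nbr x y \<longleftrightarrow> (\<Sum>j\<in>UNIV. (y $ j - x $ j)\<^sup>2) = (1::int)"
proof -
  have "norm (rvec x - rvec y) = sqrt (\<Sum>j\<in>UNIV. (real_of_int (y $ j - x $ j))\<^sup>2)"
    by (simp add: norm_vec_def L2_set_def rvec_def power2_commute)
  also have "\<dots> = sqrt (real_of_int (\<Sum>j\<in>UNIV. (y $ j - x $ j)\<^sup>2))" by simp
  finally have "nbr x y \<longleftrightarrow> sqrt (real_of_int (\<Sum>j\<in>UNIV. (y $ j - x $ j)\<^sup>2)) = 1"
    by (simp add: nbr_def)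
  also have "\<dots> \<longleftrightarrow> real_of_int (\<Sum>j\<in>UNIV. (y $ j - x $ j)\<^sup>2) = 1"
    by (metis real_sqrt_eq_1_iff)
  finally show ?thesis by linarith
qed

lemma nbr_not_refl: "\<not> nbr x x"
  by (simp add: nbr_iff)

lemma nbr_axis_plus: "nbr x (x + axis i 1)"
proof -
  have "(\<lambda>j. ((x + axis i 1) $ j - x $ j)\<^sup>2) = (\<lambda>j. if j = i then 1 else 0)"
    by (auto simp: axis_def)
  then have "(\<Sum>j\<in>UNIV. ((x + axis i 1) $ j - x $ j)\<^sup>2) = (\<Sum>j\<in>UNIV. if j = i then (1::int) else 0)"
    by (rule arg_cong)
  then show ?thesis by (simp add: nbr_iff)
qed

lemma nbr_axis_minus: "nbr x (x - axis i 1)"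
proof -
  have "(\<lambda>j. ((x - axis i 1) $ j - x $ j)\<^sup>2) = (\<lambda>j. if j = i then 1 else 0)"
    by (auto simp: axis_def)
  then have "(\<Sum>j\<in>UNIV. ((x - axis i 1) $ j - x $ j)\<^sup>2) = (\<Sum>j\<in>UNIV. if j = i then (1::int) else 0)"
    by (rule arg_cong)
  then show ?thesis by (simp add: nbr_iff)
qed

lemma nbr_sq_split:
  assumes "nbr x y"
  shows "(y $ i - x $ i)\<^sup>2 + (\<Sum>j\<in>UNIV - {i}. (y $ j - x $ j)\<^sup>2) = 1"
  using assms unfolding nbr_iff
  by (metis (no_types, lifting) UNIV_I finite sum.remove)

lemma nbr_coord: "nbr x y \<Longrightarrow> \<bar>y $ i - x $ i\<bar> \<le> 1"
proof -
  assume "nbr x y"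
  from nbr_sq_split[OF this, of i] have "(y $ i - x $ i)\<^sup>2 \<le> 1"
    by (smt (verit) sum_nonneg zero_le_power2)
  then show ?thesis using abs_square_le_1 by blast
qed

lemma nbr_coord_pm:
  assumes "nbr x y" "(y $ i - x $ i)\<^sup>2 = 1"
  shows "y = x + (y $ i - x $ i) *s axis i 1"
proof -
  from nbr_sq_split[OF assms(1), of i] assms(2)
  have "(\<Sum>j\<in>UNIV - {i}. (y $ j - x $ j)\<^sup>2) = 0" by simp
  then have "\<forall>j\<in>UNIV - {i}. (y $ j - x $ j)\<^sup>2 = 0"
    by (subst sum_nonneg_eq_0_iff[symmetric]) auto
  then show ?thesis by (auto simp: vec_eq_iff axis_def)
qed

lemma nbr_plus: "nbr x y \<Longrightarrow> y $ i - x $ i = 1 \<Longrightarrow> y = x + axis i 1"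
  using nbr_coord_pm[of x y i] by simp

lemma nbr_minus: "nbr x y \<Longrightarrow> y $ i - x $ i = -1 \<Longrightarrow> y = x - axis i 1"
  using nbr_coord_pm[of x y i] by (simp add: vec_eq_iff axis_def)

lemma finite_zbox: "finite (zbox x r)"
proof -
  have "zbox x r \<subseteq> (\<lambda>f. \<chi> i. f i) ` (PiE UNIV (\<lambda>i. {x $ i - r .. x $ i + r}))"
  proof
    fix y assume y: "y \<in> zbox x r"
    have "y $ i \<in> {x $ i - r .. x $ i + r}" for i
    proof -
      have "\<bar>y $ i - x $ i\<bar> \<le> r" using y by (simp add: zbox_def)
      then show ?thesis by auto
    qed
    then have "(\<lambda>i. y $ i) \<in> PiE UNIV (\<lambda>i. {x $ i - r .. x $ i + r})"
      by auto
    then show "y \<in> (\<lambda>f. \<chi> i. f i) ` (PiE UNIV (\<lambda>i. {x $ i - r .. x $ i + r}))"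
      by (intro image_eqI[where x="\<lambda>i. y $ i"]) auto
  qed
  then show ?thesis by (rule finite_subset) (intro finite_imageI finite_PiE, auto)
qed

definition nbrs :: "int^'d \<Rightarrow> (int^'d) set" where "nbrs x = {y. nbr x y}"

lemma nbrs_zbox: "nbrs x \<subseteq> zbox x 1"
  by (auto simp: nbrs_def zbox_def dest: nbr_coord)

lemma finite_nbrs: "finite (nbrs x)"
  using finite_subset[OF nbrs_zbox finite_zbox] .

lemma nbr_shift: "nbr x y \<longleftrightarrow> nbr 0 (y - x)"
  by (simp add: nbr_iff)

lemma nbrs_shift: "nbrs x = (\<lambda>y. y + x) ` nbrs 0"
proof (rule set_eqI)
  fix z
  show "z \<in> nbrs x \<longleftrightarrow> z \<in> (\<lambda>y. y + x) ` nbrs 0"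
  proof
    assume "z \<in> nbrs x"
    then have "z - x \<in> nbrs 0" by (simp add: nbrs_def nbr_shift[of x z])
    then show "z \<in> (\<lambda>y. y + x) ` nbrs 0" by (rule rev_image_eqI) simp
  next
    assume "z \<in> (\<lambda>y. y + x) ` nbrs 0"
    then obtain y where "y \<in> nbrs 0" "z = y + x" by auto
    then show "z \<in> nbrs x" by (simp add: nbrs_def nbr_shift[of x])
  qed
qed

lemma card_nbrs: "card (nbrs (x::int^'d)) = card (nbrs (0::int^'d))"
  unfolding nbrs_shift[of x] by (rule card_image) (auto simp: inj_on_def)



lemma exp_partial_le: "0 \<le> (y::real) \<Longrightarrow> (\<Sum>n<M. y ^ n / fact n) \<le> exp y"
proof -
  assume y: "0 \<le> y"
  have s: "summable (\<lambda>n. y ^ n /\<^sub>R fact n)" by (rule summable_exp_generic)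
  have "(\<Sum>n<M. y ^ n /\<^sub>R fact n) \<le> (\<Sum>n. y ^ n /\<^sub>R fact n)"
    by (rule sum_le_suminf[OF s]) (auto simp: y)
  then show ?thesis by (simp add: exp_def divide_inverse mult.commute)
qed

lemma poisson_tail:
  assumes lam: "0 < (lam::real)" and M: "4 * real M \<le> lam"
  shows "(\<Sum>n<M. lam ^ n / fact n * exp (- lam)) \<le> exp (- lam / 3)"
proof -
  have e: "exp 1 \<ge> (5/2::real)"
    using exp_lower_Taylor_quadratic[of 1] by simp
  have "(\<Sum>n<M. lam ^ n / fact n) \<le> (\<Sum>n<M. exp (real M) * ((lam / exp 1) ^ n / fact n))"
  proof (rule sum_mono)
    fix n assume "n \<in> {..<M}"
    then have "exp (real n) \<le> exp (real M)" by simp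
    moreover have "exp 1 ^ n = exp (real n)" using exp_of_nat_mult[of n "1::real"] by simp
    moreover have "lam ^ n = exp 1 ^ n * (lam / exp 1) ^ n"
      by (simp add: power_divide)
    ultimately have "lam ^ n \<le> exp (real M) * (lam / exp 1) ^ n"
      using lam by (metis mult_right_mono zero_le_power divide_nonneg_pos exp_gt_zero less_imp_le)
    then show "lam ^ n / fact n \<le> exp (real M) * ((lam / exp 1) ^ n / fact n)"
      by (metis divide_right_mono fact_ge_zero times_divide_eq_right)
  qed
  also have "\<dots> = exp (real M) * (\<Sum>n<M. (lam / exp 1) ^ n / fact n)"
    by (rule sum_distrib_left[symmetric])
  also have "\<dots> \<le> exp (real M) * exp (lam / exp 1)"
    using lam by (intro mult_left_mono exp_partial_le) auto
  finally have a: "(\<Sum>n<M. lam ^ n / fact n) \<le> exp (real M + lam / exp 1)"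
    by (simp only: exp_add)
  have "lam / exp 1 \<le> lam / (5/2)" using e lam by (intro divide_left_mono) auto
  also have "\<dots> = 2/5 * lam" by simp
  finally have "lam / exp 1 \<le> 2/5 * lam" .
  then have b: "real M + lam / exp 1 - lam \<le> - lam / 3" using M lam by linarith
  have "(\<Sum>n<M. lam ^ n / fact n * exp (- lam)) = (\<Sum>n<M. lam ^ n / fact n) * exp (- lam)"
    by (rule sum_distrib_right[symmetric])
  also have "\<dots> \<le> exp (real M + lam / exp 1) * exp (- lam)"
    using a by (intro mult_right_mono) auto
  also have "\<dots> = exp (real M + lam / exp 1 - lam)" by (simp only: exp_add[symmetric] diff_conv_add_uminus)
  also have "\<dots> \<le> exp (- lam / 3)" using b by simp
  finally show ?thesis .
qed

lemma half_pow_le_exp: "(1/2::real) ^ k \<le> exp (- real k / 2)"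
proof -
  have h2: "exp (1/2::real) ^ 2 = exp 1" using exp_of_nat_mult[of 2 "1/2::real"] by simp
  have "exp (1/2::real) \<le> 2"
  proof -
    have "exp (1/2::real) ^ 2 \<le> 2 ^ 2" using exp_le h2 by simp
    then show ?thesis by (rule power2_le_imp_le) simp
  qed
  then have "exp (1/2::real) ^ k \<le> 2 ^ k" by (intro power_mono) auto
  moreover have "exp (1/2::real) ^ k = exp (real k / 2)" using exp_of_nat_mult[of k "1/2::real"] by simp
  ultimately have "exp (real k / 2) \<le> 2 ^ k" by simp
  then have "1 / 2 ^ k \<le> 1 / exp (real k / 2)" by (intro divide_left_mono) auto
  moreover have "1 / exp (real k / 2) = exp (- real k / 2)" by (simp add: exp_minus inverse_eq_divide)
  ultimately show ?thesis by (simp add: power_one_over)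
qed




locale ratechain =
  fixes q :: "int^'d \<Rightarrow> int^'d \<Rightarrow> real" and Q :: real
  assumes qnn: "\<And>x y. 0 \<le> q x y"
    and totb: "\<And>x. total_rate q x \<le> Q"
begin

abbreviation "Lam \<equiv> unif_rate q"
abbreviation "K \<equiv> unif_kernel q"

lemma tot_eq: "total_rate q x = (\<Sum>y\<in>nbrs x. q x y)"
  by (simp add: total_rate_def nbrs_def)

lemma tot_nn: "0 \<le> total_rate q x"
  unfolding tot_eq by (rule sum_nonneg) (simp add: qnn)

lemma bdd: "bdd_above (range (total_rate q))"
  by (rule bdd_aboveI[where M=Q]) (auto simp: totb)

lemma Lam_ge: "total_rate q x + 1 \<le> Lam"
  unfolding unif_rate_def using cSUP_upper[OF UNIV_I bdd, of x] by simp

lemma Lam_le: "Lam \<le> 1 + Q"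
  unfolding unif_rate_def using cSUP_least[of UNIV "total_rate q" Q] totb by simp

lemma Lam_ge1: "1 \<le> Lam"
  using Lam_ge[of 0] tot_nn[of 0] by simp

definition kf :: "int^'d \<Rightarrow> int^'d \<Rightarrow> real" where
  "kf x y = (if y = x then 1 - total_rate q x / Lam else if nbr x y then q x y / Lam else 0)"

lemma kf_nn: "0 \<le> kf x y"
proof -
  have "total_rate q x / Lam \<le> 1" using Lam_ge[of x] Lam_ge1 by (simp add: divide_le_eq_1)
  then show ?thesis using Lam_ge1 by (simp add: kf_def qnn)
qed

lemma x_notin_nbrs: "x \<notin> nbrs x"
  by (simp add: nbrs_def nbr_not_refl)

lemma kf_sum: "(\<Sum>y\<in>insert x (nbrs x). kf x y) = 1"
proof -
  have "(\<Sum>y\<in>insert x (nbrs x). kf x y) = kf x x + (\<Sum>y\<in>nbrs x. kf x y)"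
    by (simp add: finite_nbrs x_notin_nbrs)
  also have "(\<Sum>y\<in>nbrs x. kf x y) = (\<Sum>y\<in>nbrs x. q x y / Lam)"
    by (rule sum.cong) (auto simp: kf_def nbrs_def nbr_not_refl)
  also have "\<dots> = total_rate q x / Lam" by (simp add: tot_eq sum_divide_distrib)
  finally show ?thesis by (simp add: kf_def)
qed

lemma kf_zero: "y \<notin> insert x (nbrs x) \<Longrightarrow> kf x y = 0"
  by (simp add: kf_def nbrs_def)

lemma kf_prob: "(\<integral>\<^sup>+y. ennreal (kf x y) \<partial>count_space UNIV) = 1"
proof -
  have "(\<integral>\<^sup>+y. ennreal (kf x y) \<partial>count_space UNIV) = (\<Sum>y\<in>insert x (nbrs x). ennreal (kf x y))"
    by (rule nn_integral_count_space') (auto simp: finite_nbrs kf_zero)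
  also have "\<dots> = ennreal (\<Sum>y\<in>insert x (nbrs x). kf x y)"
    by (rule sum_ennreal) (simp add: kf_nn)
  finally show ?thesis by (simp add: kf_sum)
qed

lemma pmf_K: "pmf (K x) y = kf x y"
proof -
  have "unif_kernel q x = embed_pmf (kf x)"
    by (simp add: unif_kernel_def kf_def[abs_def])
  then show ?thesis
    by (simp add: pmf_embed_pmf kf_nn kf_prob)
qed

lemma set_K: "set_pmf (K x) \<subseteq> insert x (nbrs x)"
  using kf_zero by (auto simp: set_pmf_eq pmf_K)

lemma integral_K: "(\<integral>y. g y \<partial>K x) = (\<Sum>y\<in>insert x (nbrs x). kf x y * g y)"
  by (subst integral_measure_pmf[of "insert x (nbrs x)"])
     (use set_K in \<open>auto simp: finite_nbrs pmf_K\<close>)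

lemma coord_sum:
  fixes g :: "int \<Rightarrow> real"
  assumes g0: "g 0 = 0"
  shows "(\<Sum>y\<in>insert x (nbrs x). kf x y * g (y $ i - x $ i))
       = q x (x + axis i 1) / Lam * g 1 + q x (x - axis i 1) / Lam * g (-1)"
proof -
  let ?S = "insert x (nbrs x)"
  let ?p = "x + axis i 1" and ?m = "x - axis i 1"
  have pm: "?p \<noteq> ?m" by (auto simp: vec_eq_iff axis_def)
  have sub: "{?p, ?m} \<subseteq> ?S" by (auto simp: nbrs_def nbr_axis_plus nbr_axis_minus)
  have "(\<Sum>y\<in>?S. kf x y * g (y $ i - x $ i)) = (\<Sum>y\<in>{?p, ?m}. kf x y * g (y $ i - x $ i))"
  proof (rule sum.mono_neutral_right[OF _ sub])
    show "finite ?S" by (simp add: finite_nbrs)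
    show "\<forall>y\<in>?S - {?p, ?m}. kf x y * g (y $ i - x $ i) = 0"
    proof
      fix y assume y: "y \<in> ?S - {?p, ?m}"
      show "kf x y * g (y $ i - x $ i) = 0"
      proof (cases "y = x")
        case True then show ?thesis by (simp add: g0)
      next
        case False
        then have n: "nbr x y" using y by (auto simp: nbrs_def)
        have "y $ i - x $ i \<noteq> 1" using nbr_plus[OF n] y by auto
        moreover have "y $ i - x $ i \<noteq> -1" using nbr_minus[OF n] y by auto
        moreover have "\<bar>y $ i - x $ i\<bar> \<le> 1" by (rule nbr_coord[OF n])
        ultimately have "y $ i - x $ i = 0" by linarith
        then show ?thesis by (simp add: g0)
      qed
    qed
  qed
  also have "\<dots> = kf x ?p * g 1 + kf x ?m * g (-1)"
    using pm by (simp add: axis_def)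
  also have "kf x ?p = q x ?p / Lam"
  proof -
    have "?p $ i \<noteq> x $ i" by (simp add: axis_def)
    then have "?p \<noteq> x" by auto
    then show ?thesis unfolding kf_def using nbr_axis_plus[of x i] by simp
  qed
  also have "kf x ?m = q x ?m / Lam"
  proof -
    have "?m $ i \<noteq> x $ i" by (simp add: axis_def)
    then have "?m \<noteq> x" by auto
    then show ?thesis unfolding kf_def using nbr_axis_minus[of x i] by simp
  qed
  finally show ?thesis .
qed

lemma Q_nn: "0 \<le> Q" using tot_nn[of 0] totb[of 0] by simp

lemma chain_exit:
  fixes c :: "int^'d" and L :: int and i :: 'd and \<rho> t :: real
  assumes L: "0 \<le> L" and \<rho>: "0 < \<rho>" and t: "0 < t"
    and drift: "\<And>x. x \<in> zbox c L \<Longrightarrow> 4 * real_of_int L * \<bar>q x (x + axis i 1) - q x (x - axis i 1)\<bar> \<le> q x (x + axis i 1) + q x (x - axis i 1)"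
    and lower: "\<And>x. x \<in> zbox c L \<Longrightarrow> \<rho> \<le> q x (x + axis i 1) + q x (x - axis i 1)"
  shows "exit_after q x (zbox c L) t \<le> exp (- t / 3) + exp (- real (nat \<lfloor>t/4\<rfloor> div nat \<lceil>4 * (1 + Q) * (real_of_int L + 1)\<^sup>2 / \<rho>\<rceil>) / 2)"
proof -
  define A where "A = zbox c L"
  define Bsq where "Bsq = (real_of_int L + 1)\<^sup>2"
  define W where "W y = max 0 (Bsq - (real_of_int (y $ i - c $ i))\<^sup>2)" for y :: "int^'d"
  define \<kappa> where "\<kappa> = \<rho> / (2 * (1 + Q))"
  have Q0: "0 \<le> Q" by (rule Q_nn)
  have kpos: "0 < \<kappa>" unfolding \<kappa>_def using \<rho> Q0 by simp
  have W0: "\<And>y. 0 \<le> W y" by (simp add: W_def)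
  have Wle: "\<And>y. W y \<le> Bsq" by (simp add: W_def Bsq_def)
  have WI: "\<And>x. integrable (measure_pmf (K x)) W"
    by (rule measure_pmf.integrable_const_bound[where B=Bsq]) (auto simp: W0 Wle)
  have drift': "(\<integral>y. W y \<partial>K x) \<le> W x - \<kappa>" if xA: "x \<in> A" for x
  proof -
    let ?S = "insert x (nbrs x)"
    let ?qp = "q x (x + axis i 1)" and ?qm = "q x (x - axis i 1)"
    define a where "a = real_of_int (x $ i - c $ i)"
    have "\<bar>x $ i - c $ i\<bar> \<le> L" using xA by (simp add: A_def zbox_def)
    then have "real_of_int \<bar>x $ i - c $ i\<bar> \<le> real_of_int L" by (simp only: of_int_le_iff)
    then have aL: "\<bar>a\<bar> \<le> real_of_int L" by (simp add: a_def)
    define g where "g d = 2 * a * real_of_int d + (real_of_int d)\<^sup>2" for d :: int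
    have Wx: "W x = Bsq - a\<^sup>2"
    proof -
      have "a\<^sup>2 \<le> Bsq" unfolding Bsq_def using abs_le_square_iff[of a "real_of_int L + 1"] aL L
        by simp
      then show ?thesis by (simp add: W_def a_def)
    qed
    have Wy: "W y = W x - g (y $ i - x $ i)" if y: "y \<in> ?S" for y
    proof -
      have d1: "\<bar>y $ i - x $ i\<bar> \<le> 1"
        using y nbr_coord[of x y i] by (auto simp: nbrs_def)
      have e: "real_of_int (y $ i - c $ i) = a + real_of_int (y $ i - x $ i)"
        by (simp add: a_def)
      have "\<bar>a + real_of_int (y $ i - x $ i)\<bar> \<le> real_of_int L + 1"
        using aL d1 by linarith
      then have "(a + real_of_int (y $ i - x $ i))\<^sup>2 \<le> Bsq"
        unfolding Bsq_def using abs_le_square_iff[of "a + real_of_int (y $ i - x $ i)" "real_of_int L + 1"] L by simp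
      then have "W y = Bsq - (a + real_of_int (y $ i - x $ i))\<^sup>2" unfolding W_def e by (simp only: max_def) auto
      also have "\<dots> = (Bsq - a\<^sup>2) - g (y $ i - x $ i)" by (simp add: g_def power2_sum)
      finally show ?thesis using Wx by simp
    qed
    have "(\<integral>y. W y \<partial>K x) = (\<Sum>y\<in>?S. kf x y * W y)" by (rule integral_K)
    also have "\<dots> = (\<Sum>y\<in>?S. kf x y * W x - kf x y * g (y $ i - x $ i))"
      by (rule sum.cong[OF refl]) (simp only: Wy right_diff_distrib)
    also have "\<dots> = W x * (\<Sum>y\<in>?S. kf x y) - (\<Sum>y\<in>?S. kf x y * g (y $ i - x $ i))"
      by (simp add: sum_subtractf sum_distrib_left mult.commute)
    also have "(\<Sum>y\<in>?S. kf x y * g (y $ i - x $ i)) = ?qp / Lam * g 1 + ?qm / Lam * g (-1)"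
      by (rule coord_sum) (simp add: g_def)
    also have "?qp / Lam * g 1 + ?qm / Lam * g (-1) = ((?qp + ?qm) + 2 * a * (?qp - ?qm)) / Lam"
    proof -
      have "Lam \<noteq> 0" using Lam_ge1 by simp
      then show ?thesis by (simp add: g_def field_simps)
    qed
    finally have I: "(\<integral>y. W y \<partial>K x) = W x - ((?qp + ?qm) + 2 * a * (?qp - ?qm)) / Lam"
      by (simp add: kf_sum)
    have "\<bar>2 * a * (?qp - ?qm)\<bar> \<le> 2 * real_of_int L * \<bar>?qp - ?qm\<bar>"
      using aL by (simp add: abs_mult mult_right_mono)
    also have "\<dots> \<le> (?qp + ?qm) / 2" using drift[of x] xA by (simp add: A_def)
    finally have "- (2 * a * (?qp - ?qm)) \<le> (?qp + ?qm) / 2" by (rule abs_le_D2)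
    moreover have "\<And>S T::real. - T \<le> S / 2 \<Longrightarrow> S / 2 \<le> S + T" by linarith
    ultimately have "(?qp + ?qm) / 2 \<le> (?qp + ?qm) + 2 * a * (?qp - ?qm)" by blast
    moreover have "\<rho> / 2 \<le> (?qp + ?qm) / 2" using lower[of x] xA by (simp add: A_def)
    ultimately have X: "\<rho> / 2 \<le> (?qp + ?qm) + 2 * a * (?qp - ?qm)" by linarith
    have "\<kappa> = (\<rho> / 2) / (1 + Q)" by (simp add: \<kappa>_def)
    also have "\<dots> \<le> (\<rho> / 2) / Lam"
      using Lam_le Lam_ge1 \<rho> by (intro divide_left_mono) auto
    also have "\<dots> \<le> ((?qp + ?qm) + 2 * a * (?qp - ?qm)) / Lam"
      using X Lam_ge1 by (intro divide_right_mono) auto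
    finally show ?thesis using I by linarith
  qed
  define n0 where "n0 = nat \<lceil>4 * (1 + Q) * Bsq / \<rho>\<rceil>"
  have n0: "2 * Bsq \<le> real (Suc n0) * \<kappa>"
  proof -
    have "4 * (1 + Q) * Bsq / \<rho> \<le> real n0" unfolding n0_def by linarith
    then have "4 * (1 + Q) * Bsq / \<rho> * \<kappa> \<le> real (Suc n0) * \<kappa>"
      using kpos by (intro mult_right_mono) auto
    moreover have "4 * (1 + Q) * Bsq / \<rho> * \<kappa> = 2 * Bsq"
    proof -
      have d: "\<rho> * 2 + Q * (\<rho> * 2) \<noteq> 0" using \<rho> Q0
        by (smt (verit) mult_nonneg_nonneg)
      show ?thesis unfolding \<kappa>_def using \<rho> Q0 d by (simp add: field_simps)
    qed
    ultimately show ?thesis by simp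
  qed
  have half: "\<And>y. ustay K A n0 y \<le> 1/2"
    by (rule ustay_half[OF W0 kpos WI drift' Wle n0])
  define M where "M = nat \<lfloor>t/4\<rfloor>"
  have uM: "ustay K A M x \<le> exp (- real (M div n0) / 2)"
  proof -
    have "ustay K A M x \<le> ustay K A ((M div n0) * n0) x"
      by (rule ustay_antimono) (simp add: div_times_less_eq_dividend)
    also have "\<dots> \<le> (1/2) ^ (M div n0)" by (rule ustay_geom[OF half])
    also have "\<dots> \<le> exp (- real (M div n0) / 2)" by (rule half_pow_le_exp)
    finally show ?thesis .
  qed
  define lam where "lam = Lam * t"
  have lam: "0 < lam" "t \<le> lam" unfolding lam_def using Lam_ge1 t by (auto simp: mult_le_cancel_right1)
  have "exit_after q x A t = (\<integral>n. ustay K A n x \<partial>poisson_pmf lam)"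
    unfolding exit_after_def ctmc_path_upto_def measure_bind_pmf_real ustay_def lam_def ..
  also have "\<dots> \<le> (\<integral>n. (indicator {..<M} n + ustay K A M x) \<partial>poisson_pmf lam)"
  proof (rule integral_mono)
    show "integrable (measure_pmf (poisson_pmf lam)) (\<lambda>n. ustay K A n x)"
      by (rule measure_pmf.integrable_const_bound[where B=1]) (auto simp: ustay_bounds)
    show "integrable (measure_pmf (poisson_pmf lam)) (\<lambda>n. indicator {..<M} n + ustay K A M x)"
      by (rule measure_pmf.integrable_const_bound[where B=2])
         (use ustay_bounds[of K A M x] in \<open>auto simp: indicator_def\<close>)
    fix n
    show "ustay K A n x \<le> indicator {..<M} n + ustay K A M x"
    proof (cases "n < M")
      case True then show ?thesis using ustay_bounds[of K A n x] ustay_bounds[of K A M x] by simp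
    next
      case False then show ?thesis using ustay_antimono[of M n K A x] by simp
    qed
  qed
  also have "\<dots> = measure_pmf.prob (poisson_pmf lam) {..<M} + ustay K A M x"
    by (subst Bochner_Integration.integral_add) (auto simp: measure_pmf.integrable_const_bound[where B=1])
  also have "measure_pmf.prob (poisson_pmf lam) {..<M} = (\<Sum>n<M. lam ^ n / fact n * exp (- lam))"
    using lam by (simp add: measure_measure_pmf_finite)
  also have "\<dots> \<le> exp (- lam / 3)"
  proof (rule poisson_tail)
    have "real M = real_of_int \<lfloor>t/4\<rfloor>" unfolding M_def using t by simp
    also have "\<dots> \<le> t / 4" by linarith
    finally show "4 * real M \<le> lam" using lam by linarith
  qed (use lam in auto)
  also have "\<dots> \<le> exp (- t / 3)" using lam by simp
  finally show ?thesis using uM unfolding A_def M_def n0_def Bsq_def by linarith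
qed

end




lemma div_lower_real:
  fixes M K :: nat assumes "0 < K"
  shows "real M / real K - 1 \<le> real (M div K)"
proof -
  have e: "M div K * K + M mod K = M" by simp
  have "M mod K < K" using assms by simp
  moreover have "(M div K + 1) * K = M div K * K + K" by simp
  ultimately have "M < (M div K + 1) * K" using e by linarith
  then have "real M < (real (M div K) + 1) * real K" by (metis of_nat_1 of_nat_add of_nat_less_iff of_nat_mult)
  then have "real M / real K < real (M div K) + 1" using assms by (simp add: divide_less_eq)
  then show ?thesis by linarith
qed

lemma asym:
  fixes r2 \<alpha> Q \<rho> :: real
  assumes r2: "0 < r2" "r2 < \<alpha>" and Q: "0 \<le> Q" and \<rho>: "0 < \<rho>"
  shows "\<exists>C4 C5. C4 > 0 \<and> C5 > 0 \<and> (\<forall>N::nat. 1 \<le> N \<longrightarrow>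
     exp (- (real N powr (2 * \<alpha>)) / 3)
     + exp (- real (nat \<lfloor>real N powr (2 * \<alpha>) / 4\<rfloor> div nat \<lceil>4 * (1 + Q) * (real_of_int \<lfloor>real N powr r2\<rfloor> + 1)\<^sup>2 / \<rho>\<rceil>) / 2)
     \<le> C4 * exp (- C5 * real N powr (2 * \<alpha> - 2 * r2)))"
proof -
  define Cq where "Cq = 4 * (1 + Q) / \<rho>"
  have Cq: "0 < Cq" unfolding Cq_def using Q \<rho> by simp
  define C where "C = 4 * Cq + 1"
  have C1: "1 \<le> C" using Cq by (simp add: C_def)
  define C5 where "C5 = 1 / (8 * C)"
  define C4 where "C4 = 1 + exp ((1 / C + 1) / 2)"
  have C5: "0 < C5" using C1 by (simp add: C5_def)
  have C4: "0 < C4" by (simp add: C4_def add_pos_pos)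
  show ?thesis
  proof (intro exI conjI allI impI)
    show "0 < C4" "0 < C5" by (fact C4, fact C5)
    fix N :: nat assume N: "1 \<le> N"
    define x where "x = real N"
    have x1: "1 \<le> x" using N by (simp add: x_def)
    define t where "t = x powr (2 * \<alpha>)"
    define c6 where "c6 = 2 * \<alpha> - 2 * r2"
    have c6: "0 < c6" using r2 by (simp add: c6_def)
    define L where "L = \<lfloor>x powr r2\<rfloor>"
    have xr1: "1 \<le> x powr r2" using x1 r2 by (simp add: ge_one_powr_ge_zero)
    have L0: "0 \<le> L" using xr1 by (simp add: L_def)
    have Lx: "real_of_int L \<le> x powr r2" by (simp add: L_def)
    have L1: "real_of_int L + 1 \<le> 2 * x powr r2" using Lx xr1 by linarith
    have sq: "(real_of_int L + 1)\<^sup>2 \<le> 4 * x powr (2 * r2)"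
    proof -
      have "(real_of_int L + 1)\<^sup>2 \<le> (2 * x powr r2)\<^sup>2"
        using L1 L0 by (intro power_mono) auto
      also have "\<dots> = 4 * (x powr r2 * x powr r2)" by (simp add: power2_eq_square)
      also have "x powr r2 * x powr r2 = x powr (r2 + r2)" by (rule powr_add[symmetric])
      also have "r2 + r2 = 2 * r2" by simp
      finally show ?thesis .
    qed
    have x2r: "1 \<le> x powr (2 * r2)" using x1 r2 by (simp add: ge_one_powr_ge_zero)
    define Kb where "Kb = nat \<lceil>4 * (1 + Q) * (real_of_int L + 1)\<^sup>2 / \<rho>\<rceil>"
    have Kbeq: "4 * (1 + Q) * (real_of_int L + 1)\<^sup>2 / \<rho> = Cq * (real_of_int L + 1)\<^sup>2"
      by (simp add: Cq_def)
    have Kpos: "0 < Kb"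
    proof -
      have "0 < Cq * (real_of_int L + 1)\<^sup>2" using Cq L0 by simp
      then show ?thesis unfolding Kb_def Kbeq by simp
    qed
    have KbC: "real Kb \<le> C * x powr (2 * r2)"
    proof -
      have "real Kb \<le> Cq * (real_of_int L + 1)\<^sup>2 + 1"
        unfolding Kb_def Kbeq using Cq by (simp add: of_nat_nat) linarith?
      also have "\<dots> \<le> Cq * (4 * x powr (2 * r2)) + x powr (2 * r2)"
        using sq x2r Cq by (intro add_mono mult_left_mono) auto
      also have "\<dots> = C * x powr (2 * r2)" by (simp add: C_def algebra_simps)
      finally show ?thesis .
    qed
    define M where "M = nat \<lfloor>t / 4\<rfloor>"
    have t0: "0 < t" using x1 by (simp add: t_def)
    have Mt: "t / 4 - 1 \<le> real M" unfolding M_def using t0 by linarith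
    have tx: "t = x powr c6 * x powr (2 * r2)"
    proof -
      have "x powr c6 * x powr (2 * r2) = x powr (c6 + 2 * r2)" by (rule powr_add[symmetric])
      also have "c6 + 2 * r2 = 2 * \<alpha>" by (simp add: c6_def)
      finally show ?thesis by (simp add: t_def)
    qed
    have Cx: "0 < C * x powr (2 * r2)" using C1 x2r by (intro mult_pos_pos) linarith+
    have divb: "x powr c6 / (4 * C) - 1 / C - 1 \<le> real (M div Kb)"
    proof -
      have A: "(t / 4 - 1) / (C * x powr (2 * r2)) \<le> real M / real Kb"
      proof (cases "t / 4 - 1 \<le> 0")
        case True
        then have "(t / 4 - 1) / (C * x powr (2 * r2)) \<le> 0"
          using Cx by (intro divide_nonpos_pos) auto
        also have "0 \<le> real M / real Kb" by simp
        finally show ?thesis .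
      next
        case False
        have "(t / 4 - 1) / (C * x powr (2 * r2)) \<le> (t / 4 - 1) / real Kb"
          using False KbC Kpos by (intro divide_left_mono) auto
        also have "\<dots> \<le> real M / real Kb"
          using Mt Kpos by (intro divide_right_mono) auto
        finally show ?thesis .
      qed
      have "(t / 4 - 1) / (C * x powr (2 * r2)) = x powr c6 / (4 * C) - 1 / (C * x powr (2 * r2))"
      proof -
        have gen: "\<And>z y C::real. 0 < C \<Longrightarrow> 0 < y \<Longrightarrow> (z * y / 4 - 1) / (C * y) = z / (4 * C) - 1 / (C * y)"
          by (simp add: field_simps)
        show ?thesis unfolding tx by (rule gen) (use C1 x2r in linarith)+
      qed
      moreover have "1 / (C * x powr (2 * r2)) \<le> 1 / C"
      proof (rule divide_left_mono)
        show "C \<le> C * x powr (2 * r2)" using C1 x2r by (simp add: mult_le_cancel_left1)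
        show "0 < C * x powr (2 * r2) * C" using Cx C1 by (intro mult_pos_pos) auto
      qed simp
      ultimately have "x powr c6 / (4 * C) - 1 / C \<le> real M / real Kb" using A by linarith
      then show ?thesis using div_lower_real[OF Kpos, of M] by linarith
    qed
    have T2: "exp (- real (M div Kb) / 2) \<le> exp ((1 / C + 1) / 2) * exp (- C5 * x powr c6)"
    proof -
      have "- real (M div Kb) / 2 \<le> (1 / C + 1) / 2 + (- C5 * x powr c6)"
        using divb unfolding C5_def by (simp add: field_simps)
      then have "exp (- real (M div Kb) / 2) \<le> exp ((1 / C + 1) / 2 + (- C5 * x powr c6))"
        by (simp only: exp_le_cancel_iff)
      also have "\<dots> = exp ((1 / C + 1) / 2) * exp (- C5 * x powr c6)" by (rule exp_add)
      finally show ?thesis .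
    qed
    have T1: "exp (- t / 3) \<le> exp (- C5 * x powr c6)"
    proof -
      have "x powr c6 \<le> t" unfolding tx using x2r by (simp add: mult_le_cancel_left1)
      moreover have "C5 \<le> 1 / 3" using C1 by (simp add: C5_def)
      moreover have "0 \<le> x powr c6" by simp
      ultimately have "C5 * x powr c6 \<le> 1 / 3 * t"
        by (intro mult_mono) auto
      then show ?thesis by simp
    qed
    have "exp (- t / 3) + exp (- real (M div Kb) / 2) \<le> C4 * exp (- C5 * x powr c6)"
    proof -
      have eq: "C4 * exp (- C5 * x powr c6) = exp (- C5 * x powr c6) + exp ((1/C+1)/2) * exp (- C5 * x powr c6)"
        by (simp add: C4_def distrib_right)
      show ?thesis unfolding eq using T1 T2 by linarith
    qed
    then show "exp (- (real N powr (2 * \<alpha>)) / 3)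
     + exp (- real (nat \<lfloor>real N powr (2 * \<alpha>) / 4\<rfloor> div nat \<lceil>4 * (1 + Q) * (real_of_int \<lfloor>real N powr r2\<rfloor> + 1)\<^sup>2 / \<rho>\<rceil>) / 2)
     \<le> C4 * exp (- C5 * real N powr (2 * \<alpha> - 2 * r2))"
      by (simp add: x_def t_def M_def Kb_def L_def c6_def)
  qed
qed




lemma phi_props:
  fixes \<phi> :: "real^'d \<Rightarrow> real" and R \<eta> :: real
  assumes sm: "smooth_on_closed (cball 0 R) \<phi>"
    and pos: "\<forall>x\<in>ball 0 R. \<phi> x > 0"
    and \<eta>: "0 < \<eta>" "\<eta> < R"
  shows "\<exists>m Mx M1. 0 < m \<and> (\<forall>z\<in>cball 0 (R - \<eta>). m \<le> \<phi> z \<and> \<phi> z \<le> Mx) \<and>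
    (\<forall>a i s. a \<in> ball 0 (R - \<eta>) \<longrightarrow> a + s *\<^sub>R axis i 1 \<in> ball 0 (R - \<eta>) \<longrightarrow>
        \<bar>\<phi> (a + s *\<^sub>R axis i 1) - \<phi> a\<bar> \<le> M1 * \<bar>s\<bar>)"
proof -
  obtain U g where U: "open U" "cball 0 R \<subseteq> U" and sg: "smooth_on U g"
    and ge: "\<forall>x\<in>cball 0 R. g x = \<phi> x"
    using sm unfolding smooth_on_closed_def by blast
  have s0: "(\<forall>x\<in>U. iter_deriv [] g differentiable (at x)) \<and> continuous_on U (iter_deriv [] g)"
    using sg unfolding smooth_on_def by (rule allE)
  have gd: "\<And>x. x \<in> U \<Longrightarrow> g differentiable (at x)"
    using s0 by simp
  have gc: "continuous_on U g"
    using s0 by simp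
  have dc: "continuous_on U (\<lambda>x. frechet_derivative g (at x) v)" for v
  proof -
    have "(\<forall>x\<in>U. iter_deriv [v] g differentiable (at x)) \<and> continuous_on U (iter_deriv [v] g)"
      using sg unfolding smooth_on_def by (rule allE)
    then show ?thesis by simp
  qed
  define Kc where "Kc = cball (0::real^'d) (R - \<eta>)"
  have Kc: "compact Kc" "Kc \<noteq> {}" using \<eta> by (auto simp: Kc_def)
  have KcU: "Kc \<subseteq> U" using U \<eta> by (auto simp: Kc_def)
  have Kcb: "Kc \<subseteq> ball 0 R" using \<eta> by (auto simp: Kc_def)
  have gcK: "continuous_on Kc g" using continuous_on_subset[OF gc KcU] .
  obtain z1 where z1: "z1 \<in> Kc" "\<forall>y\<in>Kc. g z1 \<le> g y"
    using continuous_attains_inf[OF Kc gcK] by blast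
  obtain z2 where z2: "z2 \<in> Kc" "\<forall>y\<in>Kc. g y \<le> g z2"
    using continuous_attains_sup[OF Kc gcK] by blast
  have m0: "0 < g z1" using z1(1) Kcb pos ge by auto
  have "\<forall>i. \<exists>B. \<forall>p\<in>Kc. \<bar>frechet_derivative g (at p) (axis i 1)\<bar> \<le> B"
  proof
    fix i :: 'd
    have c: "continuous_on Kc (\<lambda>p. \<bar>frechet_derivative g (at p) (axis i 1)\<bar>)"
      by (intro continuous_intros continuous_on_subset[OF dc KcU])
    obtain z where "z \<in> Kc" "\<forall>y\<in>Kc. \<bar>frechet_derivative g (at y) (axis i 1)\<bar> \<le> \<bar>frechet_derivative g (at z) (axis i 1)\<bar>"
      using continuous_attains_sup[OF Kc c] by blast
    then show "\<exists>B. \<forall>p\<in>Kc. \<bar>frechet_derivative g (at p) (axis i 1)\<bar> \<le> B" by blast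
  qed
  then obtain Bf where Bf: "\<And>i p. p \<in> Kc \<Longrightarrow> \<bar>frechet_derivative g (at p) (axis i 1)\<bar> \<le> Bf i"
    by metis
  define M1 where "M1 = (\<Sum>i\<in>UNIV. \<bar>Bf i\<bar>)"
  have M1: "\<And>i p. p \<in> Kc \<Longrightarrow> \<bar>frechet_derivative g (at p) (axis i 1)\<bar> \<le> M1"
  proof -
    fix i p assume "p \<in> Kc"
    then have "\<bar>frechet_derivative g (at p) (axis i 1)\<bar> \<le> \<bar>Bf i\<bar>" using Bf[of p i] by linarith
    also have "\<dots> \<le> M1" unfolding M1_def by (rule member_le_sum) auto
    finally show "\<bar>frechet_derivative g (at p) (axis i 1)\<bar> \<le> M1" .
  qed
  have lip: "\<bar>\<phi> (a + s *\<^sub>R axis i 1) - \<phi> a\<bar> \<le> M1 * \<bar>s\<bar>"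
    if a: "a \<in> ball 0 (R - \<eta>)" and b: "a + s *\<^sub>R axis i 1 \<in> ball 0 (R - \<eta>)" for a i s
  proof -
    define w where "w = s *\<^sub>R (axis i 1 :: real^'d)"
    define p where "p \<tau> = a + \<tau> *\<^sub>R w" for \<tau> :: real
    have seg: "p \<tau> \<in> ball 0 (R - \<eta>)" if "\<tau> \<in> {0..1}" for \<tau>
    proof -
      have eq: "p \<tau> = (1 - \<tau>) *\<^sub>R a + \<tau> *\<^sub>R (a + w)" by (simp add: p_def algebra_simps)
      have conv: "convex (ball (0::real^'d) (R - \<eta>))" by simp
      have ab: "a + w \<in> ball 0 (R - \<eta>)" using b by (simp add: w_def)
      show ?thesis unfolding eq by (rule convexD_alt[OF conv a ab]) (use that in auto)
    qed
    have segK: "p \<tau> \<in> Kc" if "\<tau> \<in> {0..1}" for \<tau> using seg[OF that] by (auto simp: Kc_def)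
    have segU: "p \<tau> \<in> U" if "\<tau> \<in> {0..1}" for \<tau> using segK[OF that] KcU by auto
    have cont: "continuous_on {0..1} (g \<circ> p)"
    proof (rule continuous_on_compose)
      show "continuous_on {0..1} p" unfolding p_def by (intro continuous_intros)
      show "continuous_on (p ` {0..1}) g" by (rule continuous_on_subset[OF gc]) (use segU in auto)
    qed
    have der: "((g \<circ> p) has_derivative (\<lambda>h. frechet_derivative g (at (p \<tau>)) (h *\<^sub>R w))) (at \<tau>)"
      if "0 < \<tau>" "\<tau> < 1" for \<tau>
    proof -
      have pd: "(p has_derivative (\<lambda>h. h *\<^sub>R w)) (at \<tau>)"
        unfolding p_def by (auto intro!: derivative_eq_intros)
      have gdd: "(g has_derivative frechet_derivative g (at (p \<tau>))) (at (p \<tau>))"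
        using gd[OF segU] that by (simp add: frechet_derivative_works[symmetric])
      show ?thesis using diff_chain_at[OF pd gdd] by (simp add: o_def)
    qed
    obtain \<tau> where \<tau>: "\<tau> \<in> {0<..<1}"
      and mv: "norm ((g \<circ> p) 1 - (g \<circ> p) 0) \<le> norm (frechet_derivative g (at (p \<tau>)) ((1 - 0) *\<^sub>R w))"
      using mvt_general[OF zero_less_one cont der] by auto
    have lin: "linear (frechet_derivative g (at (p \<tau>)))"
      using gd[OF segU] \<tau> by (intro has_derivative_linear[of g _ "at (p \<tau>)"]) (auto simp: frechet_derivative_works[symmetric])
    have "frechet_derivative g (at (p \<tau>)) w = s * frechet_derivative g (at (p \<tau>)) (axis i 1)"
      unfolding w_def using linear_scale[OF lin] by simp
    then have "\<bar>g (p 1) - g (p 0)\<bar> \<le> \<bar>s\<bar> * \<bar>frechet_derivative g (at (p \<tau>)) (axis i 1)\<bar>"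
      using mv by (simp add: abs_mult)
    also have "\<dots> \<le> \<bar>s\<bar> * M1" using M1[OF segK] \<tau> by (intro mult_left_mono) auto
    finally have "\<bar>g (p 1) - g (p 0)\<bar> \<le> M1 * \<bar>s\<bar>" by (simp add: mult.commute)
    moreover have "g (p 1) = \<phi> (a + s *\<^sub>R axis i 1)" using b ge \<eta> by (simp add: p_def w_def)
    moreover have "g (p 0) = \<phi> a" using a ge \<eta> by (simp add: p_def)
    ultimately show ?thesis by simp
  qed
  show ?thesis
  proof (intro exI conjI ballI allI impI)
    show "0 < g z1" by (rule m0)
    fix z :: "real^'d" assume "z \<in> cball 0 (R - \<eta>)"
    then have zK: "z \<in> Kc" by (simp add: Kc_def)
    then have "z \<in> cball 0 R" using Kcb by auto
    then show "g z1 \<le> \<phi> z" "\<phi> z \<le> g z2" using z1 z2 zK ge by auto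
  next
    fix a :: "real^'d" and i :: 'd and s :: real assume "a \<in> ball 0 (R - \<eta>)" "a + s *\<^sub>R axis i 1 \<in> ball 0 (R - \<eta>)"
    then show "\<bar>\<phi> (a + s *\<^sub>R axis i 1) - \<phi> a\<bar> \<le> M1 * \<bar>s\<bar>" by (rule lip)
  qed
qed




lemma eventually_small:
  fixes \<epsilon> r c :: real
  assumes e: "0 < \<epsilon>" and r: "r \<le> 1/2"
  shows "\<exists>N0::nat. \<forall>N::nat. N0 \<le> N \<longrightarrow> 1 \<le> N \<longrightarrow> real N powr r + c \<le> \<epsilon> * real N"
proof -
  define B where "B = (\<bar>c\<bar> + 1) / \<epsilon>"
  have B0: "0 < B" using e by (simp add: B_def add_pos_nonneg)
  show ?thesis
  proof (intro exI allI impI)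
    fix N :: nat assume N: "nat \<lceil>B\<^sup>2\<rceil> \<le> N" "1 \<le> N"
    define x where "x = real N"
    have x1: "1 \<le> x" using N by (simp add: x_def)
    have "B\<^sup>2 \<le> x" using N(1) unfolding x_def by linarith
    then have Bs: "B \<le> sqrt x" using B0 by (simp add: real_le_rsqrt)
    have s1: "1 \<le> sqrt x" using x1 by simp
    have "x powr r \<le> x powr (1/2)" using x1 r by (intro powr_mono) auto
    also have "\<dots> = sqrt x" using x1 by (simp add: powr_half_sqrt)
    finally have xr: "x powr r \<le> sqrt x" .
    have "\<bar>c\<bar> + 1 = \<epsilon> * B" using e by (simp add: B_def)
    then have "(\<bar>c\<bar> + 1) * sqrt x = \<epsilon> * (B * sqrt x)" by simp
    also have "\<dots> \<le> \<epsilon> * (sqrt x * sqrt x)"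
      using Bs e s1 by (intro mult_left_mono mult_right_mono) auto
    also have "\<dots> = \<epsilon> * x" using x1 by simp
    finally have "(\<bar>c\<bar> + 1) * sqrt x \<le> \<epsilon> * x" .
    moreover have "sqrt x + \<bar>c\<bar> \<le> (\<bar>c\<bar> + 1) * sqrt x"
      using s1 by (simp add: algebra_simps mult_left_mono[of 1 "sqrt x" "\<bar>c\<bar>", simplified])
    ultimately show "real N powr r + c \<le> \<epsilon> * real N" using xr unfolding x_def by linarith
  qed
qed

definition wr :: "nat \<Rightarrow> int^'d \<Rightarrow> real \<Rightarrow> int^'d \<Rightarrow> int^'d" where
  "wr N x0 r5 y = (\<chi> i. x0 $ i + ((y $ i - x0 $ i + \<lfloor>real N powr r5\<rfloor> + 1) mod (2 * \<lfloor>real N powr r5\<rfloor> + 3)) - (\<lfloor>real N powr r5\<rfloor> + 1))"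

lemma phi_per_wr: "phi_per \<phi> N x0 r5 y = \<phi> ((1 / real N) *\<^sub>R rvec (wr N x0 r5 y))"
  by (simp add: phi_per_def wr_def Let_def)

lemma wr_in: "wr N x0 r5 y \<in> zbox x0 (\<lfloor>real N powr r5\<rfloor> + 1)"
proof -
  define L where "L = \<lfloor>real N powr r5\<rfloor>"
  have L0: "0 \<le> L" by (simp add: L_def)
  have "\<bar>(y $ i - x0 $ i + L + 1) mod (2 * L + 3) - (L + 1)\<bar> \<le> L + 1" for i
  proof -
    have "0 \<le> (y $ i - x0 $ i + L + 1) mod (2 * L + 3)" using L0 by simp
    moreover have "(y $ i - x0 $ i + L + 1) mod (2 * L + 3) < 2 * L + 3" using L0 by simp
    ultimately show ?thesis by linarith
  qed
  moreover have "(wr N x0 r5 y) $ i - x0 $ i = (y $ i - x0 $ i + L + 1) mod (2 * L + 3) - (L + 1)" for i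
    by (simp add: wr_def L_def)
  ultimately have "\<bar>(wr N x0 r5 y) $ i - x0 $ i\<bar> \<le> L + 1" for i by metis
  then show ?thesis unfolding zbox_def L_def by blast
qed

lemma wr_id: "y \<in> zbox x0 (\<lfloor>real N powr r5\<rfloor> + 1) \<Longrightarrow> wr N x0 r5 y = y"
proof -
  define L where "L = \<lfloor>real N powr r5\<rfloor>"
  assume "y \<in> zbox x0 (\<lfloor>real N powr r5\<rfloor> + 1)"
  then have y: "\<bar>y $ i - x0 $ i\<bar> \<le> L + 1" for i by (simp add: zbox_def L_def)
  have "(y $ i - x0 $ i + L + 1) mod (2 * L + 3) = y $ i - x0 $ i + L + 1" for i
    using y[of i] by (intro mod_pos_pos_trivial) linarith+
  then show ?thesis by (simp add: wr_def vec_eq_iff L_def[symmetric])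
qed

lemma drift_arith:
  fixes D fx fp fm L2 M1 m Nr Nn :: real
  assumes "0 < D" "0 < fx" "\<bar>fp - fm\<bar> \<le> M1 * (2 / Nn)" "0 \<le> L2" "L2 \<le> Nr"
    "4 * M1 * Nr \<le> m * Nn" "m \<le> fp" "m \<le> fm" "0 < Nn"
  shows "4 * L2 * \<bar>fp / (D * fx) - fm / (D * fx)\<bar> \<le> fp / (D * fx) + fm / (D * fx)"
proof -
  have M1: "0 \<le> M1" using assms(3,9) by (smt (verit) divide_pos_pos mult_nonneg_nonneg zero_le_mult_iff)
  have "4 * L2 * \<bar>fp - fm\<bar> \<le> 4 * Nr * (M1 * (2 / Nn))"
    using assms(3,4,5) M1 by (intro mult_mono) auto
  also have "\<dots> = 2 * (4 * M1 * Nr) / Nn" by (simp add: field_simps)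
  also have "\<dots> \<le> 2 * (m * Nn) / Nn"
  proof (rule divide_right_mono)
    show "2 * (4 * M1 * Nr) \<le> 2 * (m * Nn)" using assms(6) by linarith
  qed (use assms(9) in auto)
  also have "\<dots> = 2 * m" using assms(9) by simp
  also have "\<dots> \<le> fp + fm" using assms(7,8) by simp
  finally have *: "4 * L2 * \<bar>fp - fm\<bar> \<le> fp + fm" .
  have p: "0 < D * fx" using assms(1,2) by simp
  have "4 * L2 * \<bar>fp / (D * fx) - fm / (D * fx)\<bar> = (4 * L2 * \<bar>fp - fm\<bar>) / (D * fx)"
    using p by (simp add: diff_divide_distrib[symmetric] abs_div)
  also have "\<dots> \<le> (fp + fm) / (D * fx)" using * p by (intro divide_right_mono) auto
  also have "\<dots> = fp / (D * fx) + fm / (D * fx)" by (simp add: add_divide_distrib)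
  finally show ?thesis .
qed




theorem lemma4p6:
  fixes D :: "(real^'d::finite) set"
    and \<phi> :: "real^'d \<Rightarrow> real"
    and \<delta> \<eta> \<delta>t r1 r2 r3 r4 r5 :: real
    and R :: nat
  assumes d3: "CARD('d) \<ge> 3"
    and D: "admissible_D D"
    and \<delta>: "0 < \<delta>" "\<delta> < min 1 (rD D / 2)"
    and R: "real R > 4 * rD D"
    and \<phi>_smooth: "smooth_on_closed (cball 0 (real R)) \<phi>"
    and \<phi>_supp: "closure {x. \<phi> x \<noteq> 0} = cball 0 (real R)"
    and \<phi>_pos: "\<forall>x\<in>ball 0 (real R). \<phi> x > 0"
    and \<phi>_harm: "harmonic_on (ball 0 (real R) - nbhd D \<delta>) \<phi>"
    and \<eta>: "0 < \<eta>" "\<eta> < real R / 100"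
    and r: "0 < r1" "r1 < r2" "r2 < r3" "r3 < r4" "r4 < r5" "r5 < 1/4"
           "r1 * (real CARD('d) - 2) + r5 < 1"
           "r1 < (real CARD('d) - 2) / (real CARD('d) - 1) * r2"
    and \<delta>t: "0 < \<delta>t"
  shows "\<forall>\<alpha>. r2 < \<alpha> \<and> \<alpha> < 1 \<longrightarrow>
    (\<exists>C4 C5 c6 C4' C5' c6'. C4 > 0 \<and> C5 > 0 \<and> c6 > 0 \<and> C4' > 0 \<and> C5' > 0 \<and> c6' > 0 \<and>
      (\<forall>(N::nat) (x0::int^'d). N \<ge> 1 \<longrightarrow>
         rvec x0 \<in> (\<lambda>x. real N *\<^sub>R x) ` nbhd D \<delta> \<longrightarrow>
         (\<forall>y\<in>zbox x0 \<lfloor>\<delta>t * real N / 100\<rfloor>. rvec y \<in> (\<lambda>x. real N *\<^sub>R x) ` ball 0 (real R - \<eta>)) \<longrightarrow>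
         (let A1 = zbox x0 \<lfloor>real N powr r1\<rfloor>; A2 = zbox x0 \<lfloor>real N powr r2\<rfloor>; t = real N powr (2 * \<alpha>) in
           (SUP x\<in>A1. exit_after (tilted_rate \<phi> N x0 r5) x A2 t) \<le> C4 * exp (- C5 * real N powr c6) \<and>
           (SUP x\<in>A1. exit_after srw_rate x A2 t) \<le> C4' * exp (- C5' * real N powr c6'))))"
proof (intro allI impI)
  fix \<alpha> :: real assume \<alpha>: "r2 < \<alpha> \<and> \<alpha> < 1"
  define dd where "dd = real CARD('d)"
  have dd: "3 \<le> dd" using d3 by (simp add: dd_def)
  have Rpos: "0 < real R" using \<eta> by linarith
  have \<eta>R: "\<eta> < real R" using \<eta> by linarith
  obtain m Mx M1 where m: "0 < m" and mM: "\<forall>z\<in>cball 0 (real R - \<eta>). m \<le> \<phi> z \<and> \<phi> z \<le> Mx"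
    and lip: "\<forall>a i s. a \<in> ball 0 (real R - \<eta>) \<longrightarrow> a + s *\<^sub>R axis i 1 \<in> ball 0 (real R - \<eta>) \<longrightarrow>
        \<bar>\<phi> (a + s *\<^sub>R axis i 1) - \<phi> a\<bar> \<le> M1 * \<bar>s\<bar>"
    using phi_props[OF \<phi>_smooth \<phi>_pos \<eta>(1) \<eta>R] by blast
  have mMx: "m \<le> Mx" using mM \<eta>R by (metis centre_in_cball diff_ge_0_iff_ge less_imp_le order_trans)
  have Mx0: "0 < Mx" using m mMx by linarith
  define i0 :: 'd where "i0 = undefined"
  define c6 where "c6 = 2 * \<alpha> - 2 * r2"
  define n0 where "n0 = real (card (nbrs (0::int^'d)))"
  define Qs where "Qs = n0 / (2 * dd)"
  define \<rho>s where "\<rho>s = 1 / dd"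
  define Qt where "Qt = n0 * (Mx / (2 * dd * m))"
  define \<rho>t where "\<rho>t = m / (dd * Mx)"
  have Qs0: "0 \<le> Qs" using dd by (simp add: Qs_def n0_def)
  have \<rho>s0: "0 < \<rho>s" using dd by (simp add: \<rho>s_def)
  have Qt0: "0 \<le> Qt" using dd m Mx0 by (simp add: Qt_def n0_def)
  have \<rho>t0: "0 < \<rho>t" using dd m Mx0 by (simp add: \<rho>t_def)
  have r2pos: "0 < r2" using r by linarith
  have r2a: "r2 < \<alpha>" using \<alpha> by simp
  obtain C4s C5s where C4s: "0 < C4s" and C5s: "0 < C5s" and asS: "\<forall>N::nat. 1 \<le> N \<longrightarrow>
     exp (- (real N powr (2 * \<alpha>)) / 3)
     + exp (- real (nat \<lfloor>real N powr (2 * \<alpha>) / 4\<rfloor> div nat \<lceil>4 * (1 + Qs) * (real_of_int \<lfloor>real N powr r2\<rfloor> + 1)\<^sup>2 / \<rho>s\<rceil>) / 2)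
     \<le> C4s * exp (- C5s * real N powr (2 * \<alpha> - 2 * r2))"
    using asym[OF r2pos r2a Qs0 \<rho>s0] by blast
  obtain C4t C5t where C4t: "0 < C4t" and C5t: "0 < C5t" and asT: "\<forall>N::nat. 1 \<le> N \<longrightarrow>
     exp (- (real N powr (2 * \<alpha>)) / 3)
     + exp (- real (nat \<lfloor>real N powr (2 * \<alpha>) / 4\<rfloor> div nat \<lceil>4 * (1 + Qt) * (real_of_int \<lfloor>real N powr r2\<rfloor> + 1)\<^sup>2 / \<rho>t\<rceil>) / 2)
     \<le> C4t * exp (- C5t * real N powr (2 * \<alpha> - 2 * r2))"
    using asym[OF r2pos r2a Qt0 \<rho>t0] by blast
  obtain N1 where N1: "\<forall>N::nat. N1 \<le> N \<longrightarrow> 1 \<le> N \<longrightarrow> real N powr r5 + 2 \<le> \<delta>t / 100 * real N"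
    using eventually_small[of "\<delta>t / 100" r5 2] \<delta>t r by auto
  define \<epsilon> where "\<epsilon> = m / (4 * \<bar>M1\<bar> + 1)"
  have \<epsilon>0: "0 < \<epsilon>" using m by (simp add: \<epsilon>_def add_nonneg_pos)
  obtain N2 where N2: "\<forall>N::nat. N2 \<le> N \<longrightarrow> 1 \<le> N \<longrightarrow> real N powr r2 + 0 \<le> \<epsilon> * real N"
    using eventually_small[OF \<epsilon>0, of r2 0] r by auto
  define N0 where "N0 = max 1 (max N1 N2)"
  define C4 where "C4 = max C4t (exp (C5t * real N0 powr c6))"
  have C4: "0 < C4" using C4t by (simp add: C4_def)
  have c6: "0 < c6" using r2a by (simp add: c6_def)
  show "\<exists>C4 C5 c6 C4' C5' c6'. C4 > 0 \<and> C5 > 0 \<and> c6 > 0 \<and> C4' > 0 \<and> C5' > 0 \<and> c6' > 0 \<and>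
      (\<forall>(N::nat) (x0::int^'d). N \<ge> 1 \<longrightarrow>
         rvec x0 \<in> (\<lambda>x. real N *\<^sub>R x) ` nbhd D \<delta> \<longrightarrow>
         (\<forall>y\<in>zbox x0 \<lfloor>\<delta>t * real N / 100\<rfloor>. rvec y \<in> (\<lambda>x. real N *\<^sub>R x) ` ball 0 (real R - \<eta>)) \<longrightarrow>
         (let A1 = zbox x0 \<lfloor>real N powr r1\<rfloor>; A2 = zbox x0 \<lfloor>real N powr r2\<rfloor>; t = real N powr (2 * \<alpha>) in
           (SUP x\<in>A1. exit_after (tilted_rate \<phi> N x0 r5) x A2 t) \<le> C4 * exp (- C5 * real N powr c6) \<and>
           (SUP x\<in>A1. exit_after srw_rate x A2 t) \<le> C4' * exp (- C5' * real N powr c6')))"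
  proof (intro exI conjI allI impI)
    show "0 < C4" "0 < C5t" "0 < c6" "0 < C4s" "0 < C5s" "0 < c6" by (fact C4, fact C5t, fact c6, fact C4s, fact C5s, fact c6)
    fix N :: nat and x0 :: "int^'d"
    assume N1': "1 \<le> N" and hx0: "rvec x0 \<in> (\<lambda>x. real N *\<^sub>R x) ` nbhd D \<delta>"
      and hbox: "\<forall>y\<in>zbox x0 \<lfloor>\<delta>t * real N / 100\<rfloor>. rvec y \<in> (\<lambda>x. real N *\<^sub>R x) ` ball 0 (real R - \<eta>)"
    define A1 where "A1 = zbox x0 \<lfloor>real N powr r1\<rfloor>"
    define L2 where "L2 = \<lfloor>real N powr r2\<rfloor>"
    define A2 where "A2 = zbox x0 L2"
    define t where "t = real N powr (2 * \<alpha>)"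
    have Npos: "0 < real N" using N1' by simp
    have t0: "0 < t" using Npos by (simp add: t_def)
    have L20: "0 \<le> L2" by (simp add: L2_def)
    have A1ne: "A1 \<noteq> {}"
    proof -
      have "x0 \<in> A1" by (simp add: A1_def zbox_def)
      then show ?thesis by auto
    qed
    have rs: "ratechain (srw_rate :: int^'d \<Rightarrow> int^'d \<Rightarrow> real) Qs"
    proof
      fix x y :: "int^'d"
      show "0 \<le> srw_rate x y" by (simp add: srw_rate_def)
      have "total_rate srw_rate x = (\<Sum>y\<in>nbrs x. 1 / (2 * dd))"
        by (simp add: total_rate_def srw_rate_def nbrs_def dd_def)
      also have "\<dots> = Qs" by (simp add: Qs_def n0_def card_nbrs[of x])
      finally show "total_rate srw_rate x \<le> Qs" by simp
    qed
    have srw_pt: "exit_after srw_rate x A2 t \<le> C4s * exp (- C5s * real N powr c6)" for x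
    proof -
      have "exit_after srw_rate x (zbox x0 L2) t \<le> exp (- t / 3) + exp (- real (nat \<lfloor>t/4\<rfloor> div nat \<lceil>4 * (1 + Qs) * (real_of_int L2 + 1)\<^sup>2 / \<rho>s\<rceil>) / 2)"
      proof (rule ratechain.chain_exit[OF rs L20 \<rho>s0 t0])
        fix y :: "int^'d"
        show "4 * real_of_int L2 * \<bar>srw_rate y (y + axis i0 1) - srw_rate y (y - axis i0 1)\<bar>
              \<le> srw_rate y (y + axis i0 1) + srw_rate y (y - axis i0 1)"
          by (simp add: srw_rate_def)
        show "\<rho>s \<le> srw_rate y (y + axis i0 1) + srw_rate y (y - axis i0 1)"
          by (simp add: srw_rate_def \<rho>s_def dd_def)
      qed
      also have "\<dots> \<le> C4s * exp (- C5s * real N powr c6)"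
        using asS N1' by (simp add: t_def L2_def c6_def)
      finally show ?thesis by (simp add: A2_def)
    qed
    have srw: "(SUP x\<in>A1. exit_after srw_rate x A2 t) \<le> C4s * exp (- C5s * real N powr c6)"
      by (rule cSUP_least[OF A1ne]) (rule srw_pt)
    have tilt: "(SUP x\<in>A1. exit_after (tilted_rate \<phi> N x0 r5) x A2 t) \<le> C4 * exp (- C5t * real N powr c6)"
    proof (cases "N0 \<le> N")
      case False
      have "1 \<le> C4 * exp (- C5t * real N powr c6)"
      proof -
        have "real N powr c6 \<le> real N0 powr c6" using False c6 by (intro powr_mono2) auto
        then have "0 \<le> C5t * real N0 powr c6 + (- C5t * real N powr c6)"
          using C5t by (simp add: mult_left_mono)
        then have "1 \<le> exp (C5t * real N0 powr c6 + (- C5t * real N powr c6))" by simp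
        also have "\<dots> = exp (C5t * real N0 powr c6) * exp (- C5t * real N powr c6)" by (rule exp_add)
        also have "\<dots> \<le> C4 * exp (- C5t * real N powr c6)"
          by (intro mult_right_mono) (auto simp: C4_def)
        finally show ?thesis .
      qed
      moreover have "exit_after (tilted_rate \<phi> N x0 r5) x A2 t \<le> 1" for x
        by (simp add: exit_after_def)
      ultimately show ?thesis
        by (intro cSUP_least[OF A1ne]) (meson order_trans)
    next
      case True
      have NN1: "N1 \<le> N" and NN2: "N2 \<le> N" using True by (auto simp: N0_def)
      define L5 where "L5 = \<lfloor>real N powr r5\<rfloor>"
      have L5B: "L5 + 1 \<le> \<lfloor>\<delta>t * real N / 100\<rfloor>"
      proof -
        have "real N powr r5 + 2 \<le> \<delta>t / 100 * real N" using N1 NN1 N1' by auto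
        then have "real N powr r5 + 2 \<le> \<delta>t * real N / 100" by simp
        then show ?thesis unfolding L5_def by linarith
      qed
      have P1: "(1 / real N) *\<^sub>R rvec w \<in> ball 0 (real R - \<eta>)" if w: "w \<in> zbox x0 (L5 + 1)" for w
      proof -
        have "w \<in> zbox x0 \<lfloor>\<delta>t * real N / 100\<rfloor>" unfolding zbox_def
        proof (intro CollectI allI)
          fix j
          have "\<bar>w $ j - x0 $ j\<bar> \<le> L5 + 1" using w by (simp add: zbox_def)
          then show "\<bar>w $ j - x0 $ j\<bar> \<le> \<lfloor>\<delta>t * real N / 100\<rfloor>" using L5B by linarith
        qed
        then obtain z where z: "z \<in> ball 0 (real R - \<eta>)" "rvec w = real N *\<^sub>R z" using hbox by blast
        then show ?thesis using Npos by simp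
      qed
      have cb: "ball 0 (real R - \<eta>) \<subseteq> cball 0 (real R - \<eta>)" by auto
      have phip: "m \<le> phi_per \<phi> N x0 r5 y \<and> phi_per \<phi> N x0 r5 y \<le> Mx" for y
      proof -
        have "(1 / real N) *\<^sub>R rvec (wr N x0 r5 y) \<in> cball 0 (real R - \<eta>)"
          using P1[OF wr_in[of N x0 r5 y, folded L5_def]] cb by blast
        then show ?thesis using mM by (simp add: phi_per_wr)
      qed
      have phid: "phi_per \<phi> N x0 r5 y = \<phi> ((1 / real N) *\<^sub>R rvec y)" if "y \<in> zbox x0 (L5 + 1)" for y
        using that by (simp add: phi_per_wr wr_id L5_def)
      have tr: "tilted_rate \<phi> N x0 r5 x y = phi_per \<phi> N x0 r5 y / (2 * dd * phi_per \<phi> N x0 r5 x)" for x y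
      proof -
        have "phi_per \<phi> N x0 r5 x \<noteq> 0" using phip[of x] m by linarith
        then show ?thesis
          by (simp add: tilted_rate_def mu_bar_def nu_bar_def dd_def power2_eq_square field_simps)
      qed
      have rt: "ratechain (tilted_rate \<phi> N x0 r5) Qt"
      proof
        fix x y :: "int^'d"
        show "0 \<le> tilted_rate \<phi> N x0 r5 x y"
          unfolding tr using phip[of x] phip[of y] m dd by simp
        have le: "tilted_rate \<phi> N x0 r5 x y \<le> Mx / (2 * dd * m)" for y
          unfolding tr using phip[of x] phip[of y] m dd Mx0 by (intro frac_le) auto
        have "total_rate (tilted_rate \<phi> N x0 r5) x = (\<Sum>y\<in>nbrs x. tilted_rate \<phi> N x0 r5 x y)"
          by (simp add: total_rate_def nbrs_def)
        also have "\<dots> \<le> real (card (nbrs x)) * (Mx / (2 * dd * m))"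
          by (rule sum_bounded_above) (rule le)
        also have "\<dots> = Qt" by (simp add: Qt_def n0_def card_nbrs[of x])
        finally show "total_rate (tilted_rate \<phi> N x0 r5) x \<le> Qt" .
      qed
      have L25: "L2 \<le> L5"
      proof -
        have "real N powr r2 \<le> real N powr r5" using N1' r by (intro powr_mono) auto
        then show ?thesis unfolding L2_def L5_def by (rule floor_mono)
      qed
      let ?e = "axis i0 (1::int) :: int^'d"
      have inbox: "x \<in> zbox x0 (L5 + 1)" "x + ?e \<in> zbox x0 (L5 + 1)" "x - ?e \<in> zbox x0 (L5 + 1)"
        if x: "x \<in> zbox x0 L2" for x
      proof -
        have b: "\<bar>x $ j - x0 $ j\<bar> \<le> L2" for j using x by (simp add: zbox_def)
        have a: "\<bar>?e $ j\<bar> \<le> 1" for j by (simp add: axis_def)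
        show "x \<in> zbox x0 (L5 + 1)" unfolding zbox_def
        proof (intro CollectI allI)
          fix j show "\<bar>x $ j - x0 $ j\<bar> \<le> L5 + 1" using b[of j] L25 by linarith
        qed
        show "x + ?e \<in> zbox x0 (L5 + 1)" unfolding zbox_def
        proof (intro CollectI allI)
          fix j show "\<bar>(x + ?e) $ j - x0 $ j\<bar> \<le> L5 + 1" using b[of j] a[of j] L25 by simp
        qed
        show "x - ?e \<in> zbox x0 (L5 + 1)" unfolding zbox_def
        proof (intro CollectI allI)
          fix j show "\<bar>(x - ?e) $ j - x0 $ j\<bar> \<le> L5 + 1" using b[of j] a[of j] L25 by simp
        qed
      qed
      have tilt_pt: "exit_after (tilted_rate \<phi> N x0 r5) x A2 t \<le> C4 * exp (- C5t * real N powr c6)" for x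
      proof -
        have "exit_after (tilted_rate \<phi> N x0 r5) x (zbox x0 L2) t \<le> exp (- t / 3) + exp (- real (nat \<lfloor>t/4\<rfloor> div nat \<lceil>4 * (1 + Qt) * (real_of_int L2 + 1)\<^sup>2 / \<rho>t\<rceil>) / 2)"
        proof (rule ratechain.chain_exit[OF rt L20 \<rho>t0 t0])
          fix y :: "int^'d" assume y: "y \<in> zbox x0 L2"
          define fx where "fx = phi_per \<phi> N x0 r5 y"
          define fp where "fp = phi_per \<phi> N x0 r5 (y + ?e)"
          define fm where "fm = phi_per \<phi> N x0 r5 (y - ?e)"
          have fx: "0 < fx" "fx \<le> Mx" using phip[of y] m by (auto simp: fx_def)
          have fp: "m \<le> fp" using phip by (simp add: fp_def)
          have fm: "m \<le> fm" using phip by (simp add: fm_def)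
          have D: "0 < 2 * dd" using dd by simp
          show "\<rho>t \<le> tilted_rate \<phi> N x0 r5 y (y + ?e) + tilted_rate \<phi> N x0 r5 y (y - ?e)"
          proof -
            have "m / (2 * dd * Mx) \<le> fp / (2 * dd * fx)" using fp fx m D by (intro frac_le) auto
            moreover have "m / (2 * dd * Mx) \<le> fm / (2 * dd * fx)" using fm fx m D by (intro frac_le) auto
            moreover have "\<rho>t = m / (2 * dd * Mx) + m / (2 * dd * Mx)" by (simp add: \<rho>t_def field_simps)
            ultimately show ?thesis unfolding tr fx_def[symmetric] fp_def[symmetric] fm_def[symmetric] by linarith
          qed
          define a where "a = (1 / real N) *\<^sub>R rvec (y - ?e)"
          have ain: "a \<in> ball 0 (real R - \<eta>)" unfolding a_def by (rule P1[OF inbox(3)[OF y]])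
          have aeq: "a + (2 / real N) *\<^sub>R axis i0 1 = (1 / real N) *\<^sub>R rvec (y + ?e)"
          proof -
            have gen: "(1 / real N) *\<^sub>R (v - u) + (2 / real N) *\<^sub>R u = (1 / real N) *\<^sub>R (v + u)" for v u :: "real^'d"
              using Npos by (simp add: vec_eq_iff field_simps)
            show ?thesis unfolding a_def rvec_add rvec_diff rvec_axis by (rule gen)
          qed
          have bin: "a + (2 / real N) *\<^sub>R axis i0 1 \<in> ball 0 (real R - \<eta>)"
            unfolding aeq by (rule P1[OF inbox(2)[OF y]])
          have "\<bar>\<phi> (a + (2 / real N) *\<^sub>R axis i0 1) - \<phi> a\<bar> \<le> M1 * \<bar>2 / real N\<bar>"
            using lip ain bin by blast
          moreover have "\<phi> (a + (2 / real N) *\<^sub>R axis i0 1) = fp"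
            unfolding aeq fp_def by (rule phid[symmetric]) (rule inbox(2)[OF y])
          moreover have "\<phi> a = fm" unfolding a_def fm_def by (rule phid[symmetric]) (rule inbox(3)[OF y])
          ultimately have "\<bar>fp - fm\<bar> \<le> M1 * \<bar>2 / real N\<bar>" by simp
          also have "\<dots> = M1 * (2 / real N)" using Npos by simp
          also have "\<dots> \<le> \<bar>M1\<bar> * (2 / real N)" using Npos by (intro mult_right_mono) auto
          finally have lipf: "\<bar>fp - fm\<bar> \<le> \<bar>M1\<bar> * (2 / real N)" .
          have Nr: "4 * \<bar>M1\<bar> * real N powr r2 \<le> m * real N"
          proof -
            have "real N powr r2 \<le> \<epsilon> * real N" using N2 NN2 N1' by auto
            then have "4 * \<bar>M1\<bar> * real N powr r2 \<le> 4 * \<bar>M1\<bar> * (\<epsilon> * real N)"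
              by (intro mult_left_mono) auto
            also have "\<dots> = (4 * \<bar>M1\<bar> * \<epsilon>) * real N" by simp
            also have "4 * \<bar>M1\<bar> * \<epsilon> \<le> m"
            proof -
              have "4 * \<bar>M1\<bar> * \<epsilon> = m * (4 * \<bar>M1\<bar> / (4 * \<bar>M1\<bar> + 1))" by (simp add: \<epsilon>_def)
              also have "\<dots> \<le> m * 1" using m by (intro mult_left_mono) auto
              finally show ?thesis by simp
            qed
            then have "(4 * \<bar>M1\<bar> * \<epsilon>) * real N \<le> m * real N" using Npos by (intro mult_right_mono) auto
            finally show ?thesis .
          qed
          have L2r: "real_of_int L2 \<le> real N powr r2" by (simp add: L2_def)
          have "4 * real_of_int L2 * \<bar>fp / (2 * dd * fx) - fm / (2 * dd * fx)\<bar> \<le> fp / (2 * dd * fx) + fm / (2 * dd * fx)"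
            by (rule drift_arith[OF D fx(1) lipf _ L2r Nr fp fm Npos]) (simp add: L20)
          then show "4 * real_of_int L2 * \<bar>tilted_rate \<phi> N x0 r5 y (y + ?e) - tilted_rate \<phi> N x0 r5 y (y - ?e)\<bar>
              \<le> tilted_rate \<phi> N x0 r5 y (y + ?e) + tilted_rate \<phi> N x0 r5 y (y - ?e)"
            unfolding tr fx_def[symmetric] fp_def[symmetric] fm_def[symmetric] .
        qed
        also have "\<dots> \<le> C4t * exp (- C5t * real N powr c6)"
          using asT N1' by (simp add: t_def L2_def c6_def)
        also have "\<dots> \<le> C4 * exp (- C5t * real N powr c6)"
          by (intro mult_right_mono) (auto simp: C4_def)
        finally show ?thesis by (simp add: A2_def)
      qed
      show ?thesis by (rule cSUP_least[OF A1ne]) (rule tilt_pt)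
    qed
    show "let A1 = zbox x0 \<lfloor>real N powr r1\<rfloor>; A2 = zbox x0 \<lfloor>real N powr r2\<rfloor>; t = real N powr (2 * \<alpha>) in
           (SUP x\<in>A1. exit_after (tilted_rate \<phi> N x0 r5) x A2 t) \<le> C4 * exp (- C5t * real N powr c6) \<and>
           (SUP x\<in>A1. exit_after srw_rate x A2 t) \<le> C4s * exp (- C5s * real N powr c6)"
      using srw tilt unfolding Let_def A1_def A2_def L2_def t_def by simp
  qed
qed


end
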